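(* For every integer $N\ge 0$, let $T_{1\times 4}(7,N)$ be the number of tilings of a $7\times n$ rectangle, $n=4N/7$, by $N$ tiles of size $1\times 4$ (and $0$ if $4N/7\notin\mathbb{Z}$). Then, as formal power series, \[ \sum_{N\ge 0} T_{1\times 4}(7,N)\,z^N=\frac{(1-z^7)^3}{1-8z^7+6z^{14}-4z^{21}+z^{28}}. \]
   Context: A tiling of an $m\times n$ rectangle (width $m$, length $n$, made of $mn$ unit squares) by $a\times b$ tiles is a partition of the rectangle into non-overlapping axis-parallel $a\times b$ rectangles with integer corner coordinates, each placed in either of its two orientations. Tilings related by reflections or rotations of the rectangle are counted as distinct. The empty tiling counts once for $N=0$. *)

theory Defs
  imports "HOL-Computational_Algebra.Formal_Power_Series"
begin

text \<open>Cells of the board are unit squares indexed by (i,j) with i < m (width), j < n (length).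
  A tile placed with lower corner (x,y), extent w in the first and h in the second coordinate:\<close>
definition rect :: "nat \<Rightarrow> nat \<Rightarrow> nat \<Rightarrow> nat \<Rightarrow> (nat \<times> nat) set" where
  "rect x y w h = {x..<x+w} \<times> {y..<y+h}"

definition is_tile :: "nat \<Rightarrow> nat \<Rightarrow> (nat \<times> nat) set \<Rightarrow> bool" where
  "is_tile a b t \<longleftrightarrow> (\<exists>x y. t = rect x y a b \<or> t = rect x y b a)"

definition is_tiling :: "nat \<Rightarrow> nat \<Rightarrow> nat \<Rightarrow> nat \<Rightarrow> (nat \<times> nat) set set \<Rightarrow> bool" where
  "is_tiling a b m n T \<longleftrightarrow>
     (\<forall>t\<in>T. is_tile a b t) \<and> pairwise disjnt T \<and> \<Union>T = {0..<m} \<times> {0..<n}"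

definition tilings_count :: "nat \<Rightarrow> nat \<Rightarrow> nat \<Rightarrow> nat \<Rightarrow> nat" where
  "tilings_count a b m n = card {T. is_tiling a b m n T}"

definition T14_7 :: "nat \<Rightarrow> nat" where
  "T14_7 N = (if 7 dvd (4 * N) then tilings_count 1 4 7 (4 * N div 7) else 0)"

end

theory Submission
  imports Defs
begin

definition tilings :: "(nat \<times> nat) set \<Rightarrow> (nat \<times> nat) set set set" where
  "tilings R = {T. (\<forall>t\<in>T. is_tile 1 4 t) \<and> pairwise disjnt T \<and> \<Union>T = R}"

lemma tile_nonempty: "is_tile 1 4 t \<Longrightarrow> t \<noteq> {}"
proof -
  assume "is_tile 1 4 t"
  then obtain x y where "t = rect x y 1 4 \<or> t = rect x y 4 1" by (auto simp: is_tile_def)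
  then have "(x,y) \<in> t" by (auto simp: rect_def)
  then show ?thesis by auto
qed

lemma tilings_finite: "finite R \<Longrightarrow> finite (tilings R)"
proof -
  assume "finite R"
  have "tilings R \<subseteq> Pow (Pow R)" by (auto simp: tilings_def)
  then show ?thesis using \<open>finite R\<close> by (meson finite_Pow_iff finite_subset)
qed

lemma remove_tile:
  assumes t: "is_tile 1 4 t"
  shows "card {T\<in>tilings R. t \<in> T} = (if t \<subseteq> R then card (tilings (R - t)) else 0)"
proof (cases "t \<subseteq> R")
  case False
  have "{T\<in>tilings R. t \<in> T} = {}"
  proof (rule ccontr)
    assume "{T\<in>tilings R. t \<in> T} \<noteq> {}"
    then obtain T where "T \<in> tilings R" "t \<in> T" by auto
    then have "t \<subseteq> R" by (auto simp: tilings_def)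
    then show False using False by simp
  qed
  then have "card {T\<in>tilings R. t \<in> T} = 0" by (metis card.empty)
  then show ?thesis using False by presburger
next
  case True
  have ne: "t \<noteq> {}" using tile_nonempty[OF t] .
  have "bij_betw (\<lambda>T. T - {t}) {T\<in>tilings R. t \<in> T} (tilings (R - t))"
  proof (rule bij_betw_byWitness[where f' = "insert t"])
    show "\<forall>a\<in>{T \<in> tilings R. t \<in> T}. insert t (a - {t}) = a" by auto
    show "\<forall>a'\<in>tilings (R - t). insert t a' - {t} = a'"
    proof
      fix a' assume "a' \<in> tilings (R - t)"
      then have "t \<notin> a'" using ne by (auto simp: tilings_def)
      then show "insert t a' - {t} = a'" by auto
    qed
    show "(\<lambda>T. T - {t}) ` {T \<in> tilings R. t \<in> T} \<subseteq> tilings (R - t)"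
    proof
      fix T' assume "T' \<in> (\<lambda>T. T - {t}) ` {T \<in> tilings R. t \<in> T}"
      then obtain T where T: "T \<in> tilings R" "t \<in> T" "T' = T - {t}" by auto
      have pw: "pairwise disjnt T" and un: "\<Union>T = R" using T by (auto simp: tilings_def)
      have "\<Union>(T - {t}) = R - t"
      proof
        show "\<Union>(T - {t}) \<subseteq> R - t"
        proof
          fix x assume "x \<in> \<Union>(T - {t})"
          then obtain s where s: "s \<in> T" "s \<noteq> t" "x \<in> s" by auto
          have "disjnt s t" using pw s T(2) by (auto simp: pairwise_def)
          then show "x \<in> R - t" using s un by (auto simp: disjnt_def)
        qed
        show "R - t \<subseteq> \<Union>(T - {t})" using un by auto
      qed
      then show "T' \<in> tilings (R - t)" using T pw
        by (auto simp: tilings_def pairwise_def)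
    qed
    show "insert t ` tilings (R - t) \<subseteq> {T \<in> tilings R. t \<in> T}"
    proof
      fix T' assume "T' \<in> insert t ` tilings (R - t)"
      then obtain T where T: "T \<in> tilings (R - t)" "T' = insert t T" by auto
      have "\<forall>s\<in>T. disjnt s t \<and> disjnt t s" using T by (auto simp: tilings_def disjnt_def)
      then show "T' \<in> {T \<in> tilings R. t \<in> T}" using T True t
        by (auto simp: tilings_def pairwise_insert)
    qed
  qed
  then show ?thesis using True bij_betw_same_card by auto
qed

lemma min_cell:
  assumes fin: "finite R" and c: "(cx,cy) \<in> R"
    and mn: "\<forall>(x,y)\<in>R. cy < y \<or> (cy = y \<and> cx \<le> x)"
  shows "card (tilings R) =
    (if rect cx cy 1 4 \<subseteq> R then card (tilings (R - rect cx cy 1 4)) else 0) +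
    (if rect cx cy 4 1 \<subseteq> R then card (tilings (R - rect cx cy 4 1)) else 0)"
proof -
  define h where "h = rect cx cy 1 4"
  define v where "v = rect cx cy 4 1"
  have th: "is_tile 1 4 h" and tv: "is_tile 1 4 v" by (auto simp: is_tile_def h_def v_def)
  have ch: "(cx,cy) \<in> h" and cv: "(cx,cy) \<in> v" by (auto simp: h_def v_def rect_def)
  have hv: "h \<noteq> v"
  proof
    assume "h = v"
    moreover have "(cx, Suc cy) \<in> h" by (auto simp: h_def rect_def)
    moreover have "(cx, Suc cy) \<notin> v" by (auto simp: v_def rect_def)
    ultimately show False by simp
  qed
  have cov: "h \<in> T \<or> v \<in> T" if T: "T \<in> tilings R" for T
  proof -
    have "(cx,cy) \<in> \<Union>T" using T c by (auto simp: tilings_def)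
    then obtain t where t: "t \<in> T" "(cx,cy) \<in> t" by auto
    have tt: "is_tile 1 4 t" and tR: "t \<subseteq> R" using T t by (auto simp: tilings_def)
    then obtain x y where xy: "t = rect x y 1 4 \<or> t = rect x y 4 1" by (auto simp: is_tile_def)
    have "(x,y) \<in> t" using xy by (auto simp: rect_def)
    then have "cy < y \<or> (cy = y \<and> cx \<le> x)" using tR mn by auto
    moreover have "x \<le> cx \<and> y \<le> cy" using xy t(2) by (auto simp: rect_def)
    ultimately have "x = cx" "y = cy" by auto
    then have "t = h \<or> t = v" using xy by (auto simp: h_def v_def)
    then show ?thesis using t by auto
  qed
  have split: "tilings R = {T\<in>tilings R. h \<in> T} \<union> {T\<in>tilings R. v \<in> T}" using cov by auto
  have disj: "{T\<in>tilings R. h \<in> T} \<inter> {T\<in>tilings R. v \<in> T} = {}"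
  proof (rule ccontr)
    assume "\<not> ?thesis"
    then obtain T where "T \<in> tilings R" "h \<in> T" "v \<in> T" by auto
    then have "disjnt h v" using hv by (auto simp: tilings_def pairwise_def)
    then show False using ch cv by (auto simp: disjnt_def)
  qed
  have "card (tilings R) = card {T\<in>tilings R. h \<in> T} + card {T\<in>tilings R. v \<in> T}"
    using split disj tilings_finite[OF fin]
    by (metis (no_types, lifting) card_Un_disjoint finite_Un)
  then show ?thesis using remove_tile[OF th] remove_tile[OF tv] by (simp add: h_def v_def)
qed

definition reg :: "nat list \<Rightarrow> nat \<Rightarrow> nat \<Rightarrow> (nat \<times> nat) set" where
  "reg d j m = {(x,y). x < length d \<and> j + d!x \<le> y \<and> y < m}"

definition valid :: "nat list \<Rightarrow> nat \<Rightarrow> nat \<Rightarrow> bool" where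
  "valid d j m \<longleftrightarrow> (\<forall>x<length d. j + d!x \<le> m)"

definition Hc :: "nat list \<Rightarrow> nat \<Rightarrow> nat \<Rightarrow> nat" where
  "Hc d j m = (if valid d j m then card (tilings (reg d j m)) else 0)"

lemma reg_finite: "finite (reg d j m)"
proof -
  have "reg d j m \<subseteq> {..<length d} \<times> {..<m}" by (auto simp: reg_def)
  then show ?thesis by (rule finite_subset) auto
qed

lemma upd_le: "(\<forall>x<length xs. j + xs!x \<le> m) \<Longrightarrow> j + v \<le> m \<Longrightarrow> \<forall>x<length (xs[k:=v]). j + xs[k:=v]!x \<le> m"
proof (intro allI impI)
  fix x assume "\<forall>x<length xs. j + xs!x \<le> m" "j + v \<le> m" "x < length (xs[k:=v])"
  then show "j + xs[k:=v]!x \<le> m" by (cases "k = x") auto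
qed

lemma stepB:
  assumes i: "i < length d" "d!i = 0" and lt: "\<forall>x<i. 1 \<le> d!x" and jm: "j < m"
  shows "Hc d j m = Hc (d[i:=4]) j m +
    (if i+3 < length d \<and> d!(i+1) = 0 \<and> d!(i+2) = 0 \<and> d!(i+3) = 0
     then Hc (d[i:=1,i+1:=1,i+2:=1,i+3:=1]) j m else 0)"
proof (cases "valid d j m")
  case False
  then obtain x where x: "x < length d" "m < j + d!x" by (auto simp: valid_def not_le)
  have xi: "x \<noteq> i" using x i jm by auto
  have "\<not> valid (d[i:=4]) j m" using x xi by (auto simp: valid_def)
  moreover have "\<not> valid (d[i:=1,i+1:=1,i+2:=1,i+3:=1]) j m"
    if "d!(i+1) = 0 \<and> d!(i+2) = 0 \<and> d!(i+3) = 0"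
  proof -
    have "x \<noteq> i+1" "x \<noteq> i+2" "x \<noteq> i+3" using that x jm by auto
    then show ?thesis using x xi by (auto simp: valid_def)
  qed
  ultimately show ?thesis using False by (auto simp: Hc_def)
next
  case True
  let ?R = "reg d j m"
  have c: "(i,j) \<in> ?R" using i jm by (auto simp: reg_def)
  have mn: "\<forall>(x,y)\<in>?R. j < y \<or> (j = y \<and> i \<le> x)"
  proof -
    { fix x y assume xy: "(x,y) \<in> ?R"
      have "j < y \<or> (j = y \<and> i \<le> x)"
      proof (cases "x < i")
        case True then have "1 \<le> d!x" using lt by auto
        then show ?thesis using xy by (auto simp: reg_def)
      next
        case False then show ?thesis using xy by (auto simp: reg_def)
      qed }
    then show ?thesis by auto
  qed
  have H1: "rect i j 1 4 \<subseteq> ?R \<longleftrightarrow> j + 4 \<le> m"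
  proof
    assume "rect i j 1 4 \<subseteq> ?R"
    moreover have "(i, j+3) \<in> rect i j 1 4" by (auto simp: rect_def)
    ultimately show "j + 4 \<le> m" by (auto simp: reg_def)
  next
    assume "j + 4 \<le> m" then show "rect i j 1 4 \<subseteq> ?R" using i by (auto simp: rect_def reg_def)
  qed
  have H2: "?R - rect i j 1 4 = reg (d[i:=4]) j m" if "j + 4 \<le> m"
    using i by (auto simp: rect_def reg_def nth_list_update split: if_splits)
  have H3: "valid (d[i:=4]) j m \<longleftrightarrow> j + 4 \<le> m"
    using True i by (auto simp: valid_def nth_list_update)
  have V1: "rect i j 4 1 \<subseteq> ?R \<longleftrightarrow> (i+3 < length d \<and> d!(i+1) = 0 \<and> d!(i+2) = 0 \<and> d!(i+3) = 0)"
  proof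
    assume a: "rect i j 4 1 \<subseteq> ?R"
    have "(i+1, j) \<in> rect i j 4 1" "(i+2, j) \<in> rect i j 4 1" "(i+3, j) \<in> rect i j 4 1"
      by (auto simp: rect_def)
    then show "i+3 < length d \<and> d!(i+1) = 0 \<and> d!(i+2) = 0 \<and> d!(i+3) = 0"
      using a by (auto simp: reg_def)
  next
    assume a: "i+3 < length d \<and> d!(i+1) = 0 \<and> d!(i+2) = 0 \<and> d!(i+3) = 0"
    show "rect i j 4 1 \<subseteq> ?R"
    proof
      fix p assume "p \<in> rect i j 4 1"
      then obtain x where p: "p = (x, j)" "i \<le> x" "x < i + 4" by (auto simp: rect_def)
      then have "x = i \<or> x = i+1 \<or> x = i+2 \<or> x = i+3" by auto
      then show "p \<in> ?R" using a p i jm by (auto simp: reg_def)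
    qed
  qed
  have V2: "?R - rect i j 4 1 = reg (d[i:=1,i+1:=1,i+2:=1,i+3:=1]) j m"
    if a: "i+3 < length d \<and> d!(i+1) = 0 \<and> d!(i+2) = 0 \<and> d!(i+3) = 0"
  proof -
    have "(x,y) \<in> ?R - rect i j 4 1 \<longleftrightarrow> (x,y) \<in> reg (d[i:=1,i+1:=1,i+2:=1,i+3:=1]) j m" for x y
    proof (cases "x = i \<or> x = i+1 \<or> x = i+2 \<or> x = i+3")
      case True
      then show ?thesis
      proof (elim disjE)
        assume "x = i" then show ?thesis using a i by (auto simp: reg_def rect_def nth_list_update)
      next
        assume "x = i+1" then show ?thesis using a i by (auto simp: reg_def rect_def nth_list_update)
      next
        assume "x = i+2" then show ?thesis using a i by (auto simp: reg_def rect_def nth_list_update)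
      next
        assume "x = i+3" then show ?thesis using a i by (auto simp: reg_def rect_def nth_list_update)
      qed
    next
      case False
      then have "\<not> (i \<le> x \<and> x < i + 4)" by auto
      then show ?thesis using False a i by (auto simp: reg_def rect_def nth_list_update)
    qed
    then show ?thesis by auto
  qed
  have V3: "valid (d[i:=1,i+1:=1,i+2:=1,i+3:=1]) j m"
    using True jm unfolding valid_def by (intro upd_le) auto
  have "Hc d j m = card (tilings ?R)" using True by (simp add: Hc_def)
  also have "\<dots> = (if rect i j 1 4 \<subseteq> ?R then card (tilings (?R - rect i j 1 4)) else 0) +
    (if rect i j 4 1 \<subseteq> ?R then card (tilings (?R - rect i j 4 1)) else 0)"
    by (rule min_cell[OF reg_finite c mn])
  also have "\<dots> = Hc (d[i:=4]) j m +
    (if i+3 < length d \<and> d!(i+1) = 0 \<and> d!(i+2) = 0 \<and> d!(i+3) = 0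
     then Hc (d[i:=1,i+1:=1,i+2:=1,i+3:=1]) j m else 0)"
    using H1 H2 H3 V1 V2 V3 by (simp add: Hc_def)
  finally show ?thesis .
qed

fun cstep :: "nat list \<Rightarrow> nat list list" where
  "cstep [] = [[]]"
| "cstep (a # r) = (if 0 < a then map (Cons (a - 1)) (cstep r)
     else map (Cons 3) (cstep r) @
       (if take 3 r = [0,0,0] then map (\<lambda>e. 0#0#0#0#e) (cstep (drop 3 r)) else []))"

fun G :: "nat \<Rightarrow> nat list \<Rightarrow> nat" where
  "G 0 d = (if \<forall>v\<in>set d. v = 0 then 1 else 0)"
| "G (Suc n) d = sum_list (map (G n) (cstep d))"

lemma take3: "take 3 r = [0,0,0] \<longleftrightarrow> (\<exists>r'. r = 0#0#0#r')"
proof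
  assume "take 3 r = [0,0,0]"
  then have "r = [0,0,0] @ drop 3 r" by (metis append_take_drop_id)
  then show "\<exists>r'. r = 0#0#0#r'" by auto
qed auto

lemma len3: "3 \<le> length r \<Longrightarrow> \<exists>x y z r'. r = x#y#z#r'"
  by (cases r; cases "tl r"; cases "tl (tl r)"; auto)

lemma shift_base:
  assumes "\<forall>v\<in>set p. 1 \<le> v"
  shows "Hc p j (Suc (j+n)) = Hc (map (\<lambda>v. v - 1) p) (Suc j) (Suc j + n)"
proof -
  have a: "\<forall>x<length p. 1 \<le> p!x" using assms by auto
  have "valid p j (Suc (j+n)) = valid (map (\<lambda>v. v - 1) p) (Suc j) (Suc j + n)"
    unfolding valid_def
  proof (intro iffI allI impI)
    fix x assume h: "\<forall>x<length p. j + p ! x \<le> Suc (j + n)" "x < length (map (\<lambda>v. v - 1) p)"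
    then have "1 \<le> p!x" "j + p ! x \<le> Suc (j + n)" using a by auto
    then show "Suc j + map (\<lambda>v. v - 1) p ! x \<le> Suc j + n" using h by auto
  next
    fix x assume h: "\<forall>x<length (map (\<lambda>v. v - 1) p). Suc j + map (\<lambda>v. v - 1) p ! x \<le> Suc j + n" "x < length p"
    then have "1 \<le> p!x" "Suc j + (p!x - 1) \<le> Suc j + n" using a by auto
    then show "j + p ! x \<le> Suc (j + n)" by auto
  qed
  moreover have "reg p j (Suc (j+n)) = reg (map (\<lambda>v. v - 1) p) (Suc j) (Suc j + n)"
  proof -
    have "(x,y) \<in> reg p j (Suc (j+n)) \<longleftrightarrow> (x,y) \<in> reg (map (\<lambda>v. v - 1) p) (Suc j) (Suc j + n)" for x y
    proof (cases "x < length p")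
      case True
      with a have "1 \<le> p!x" by auto
      then show ?thesis using True by (auto simp: reg_def)
    next
      case False
      then show ?thesis by (auto simp: reg_def)
    qed
    then show ?thesis by auto
  qed
  ultimately show ?thesis by (simp add: Hc_def)
qed

lemma lemC:
  "\<forall>v\<in>set p. 1 \<le> v \<Longrightarrow> Hc (p @ r) j (Suc (j+n)) =
     sum_list (map (\<lambda>e. Hc (map (\<lambda>v. v - 1) p @ e) (Suc j) (Suc j + n)) (cstep r))"
proof (induction r arbitrary: p rule: cstep.induct)
  case 1
  then show ?case using shift_base[OF 1] by simp
next
  case (2 a r)
  show ?case
  proof (cases "0 < a")
    case True
    have "Hc (p @ a # r) j (Suc (j+n)) = Hc ((p @ [a]) @ r) j (Suc (j+n))" by simp
    also have "\<dots> = sum_list (map (\<lambda>e. Hc (map (\<lambda>v. v - 1) (p @ [a]) @ e) (Suc j) (Suc j + n)) (cstep r))"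
      using 2(1)[OF True, of "p @ [a]"] 2(4) True by auto
    finally show ?thesis using True by (simp add: o_def)
  next
    case False
    then have a0: "a = 0" by simp
    let ?d = "p @ 0 # r" and ?i = "length p"
    have s: "Hc ?d j (Suc (j+n)) = Hc (?d[?i:=4]) j (Suc (j+n)) +
      (if ?i+3 < length ?d \<and> ?d!(?i+1) = 0 \<and> ?d!(?i+2) = 0 \<and> ?d!(?i+3) = 0
       then Hc (?d[?i:=1,?i+1:=1,?i+2:=1,?i+3:=1]) j (Suc (j+n)) else 0)"
      by (rule stepB) (use 2(4) in \<open>auto simp: nth_append\<close>)
    have u1: "?d[?i:=4] = (p @ [4]) @ r" by (simp add: list_update_append)
    have h: "Hc ((p @ [4]) @ r) j (Suc (j+n)) =
       sum_list (map (\<lambda>e. Hc (map (\<lambda>v. v - 1) p @ 3 # e) (Suc j) (Suc j + n)) (cstep r))"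
      using 2(2)[OF False, of "p @ [4]"] 2(4) by (simp add: o_def)
    show ?thesis
    proof (cases "take 3 r = [0,0,0]")
      case True
      then obtain r' where r: "r = 0#0#0#r'" using take3 by auto
      have cond: "?i+3 < length ?d \<and> ?d!(?i+1) = 0 \<and> ?d!(?i+2) = 0 \<and> ?d!(?i+3) = 0"
        using r by (simp add: nth_append)
      have u2: "?d[?i:=1,?i+1:=1,?i+2:=1,?i+3:=1] = (p @ [1,1,1,1]) @ r'"
        using r by (simp add: list_update_append)
      have v: "Hc ((p @ [1,1,1,1]) @ r') j (Suc (j+n)) =
       sum_list (map (\<lambda>e. Hc (map (\<lambda>v. v - 1) p @ 0#0#0#0# e) (Suc j) (Suc j + n)) (cstep r'))"
        using 2(3)[OF False True, of "p @ [1,1,1,1]"] 2(4) r by (simp add: o_def)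
      show ?thesis using s u1 u2 h v cond a0 True r by (simp add: o_def)
    next
      case False
      have cond: "\<not> (?i+3 < length ?d \<and> ?d!(?i+1) = 0 \<and> ?d!(?i+2) = 0 \<and> ?d!(?i+3) = 0)"
      proof
        assume c: "?i+3 < length ?d \<and> ?d!(?i+1) = 0 \<and> ?d!(?i+2) = 0 \<and> ?d!(?i+3) = 0"
        then have "3 \<le> length r" by simp
        then obtain x y z r' where "r = x#y#z#r'" using len3 by blast
        then show False using c False by (auto simp: nth_append)
      qed
      have s': "Hc ?d j (Suc (j+n)) = Hc (?d[?i:=4]) j (Suc (j+n))"
        using s by (simp only: if_not_P[OF cond] add_0_right)
      show ?thesis using s' u1 h a0 False by (simp add: o_def)
    qed
  qed
qed

lemma Hc_G: "Hc d j (j + n) = G n d"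
proof (induction n arbitrary: j d)
  case 0
  have "Hc d j j = (if \<forall>v\<in>set d. v = 0 then 1 else 0)"
  proof (cases "\<forall>v\<in>set d. v = 0")
    case True
    then have "valid d j j" by (auto simp: valid_def)
    moreover have "reg d j j = {}" by (auto simp: reg_def)
    moreover have "tilings {} = {{}}" using tile_nonempty by (auto simp: tilings_def)
    ultimately show ?thesis using True by (simp add: Hc_def)
  next
    case False
    then have "\<not> valid d j j" by (auto simp: valid_def in_set_conv_nth)
    then show ?thesis using False by (simp add: Hc_def)
  qed
  then show ?case by simp
next
  case (Suc n)
  have "Hc d j (j + Suc n) = Hc ([] @ d) j (Suc (j + n))" by simp
  also have "\<dots> = sum_list (map (\<lambda>e. Hc e (Suc j) (Suc j + n)) (cstep d))"
    using lemC[of "[]" d j n] by simp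
  also have "\<dots> = sum_list (map (G n) (cstep d))"
  proof -
    have "\<And>e. Hc e (Suc j) (Suc j + n) = G n e" using Suc.IH by blast
    then show ?thesis by simp
  qed
  finally show ?case by simp
qed

lemma count_G: "tilings_count 1 4 7 n = G n [0,0,0,0,0,0,0]"
proof -
  have z: "[0,0,0,0,0,0,0::nat] = replicate 7 0" by (simp add: numeral_eq_Suc)
  have "reg [0,0,0,0,0,0,0] 0 n = {0..<7} \<times> {0..<n}" unfolding z by (auto simp: reg_def)
  moreover have "valid [0,0,0,0,0,0,0] 0 n" unfolding z by (auto simp: valid_def)
  ultimately have "Hc [0,0,0,0,0,0,0] 0 (0 + n) = tilings_count 1 4 7 n"
    by (simp add: Hc_def tilings_count_def tilings_def is_tiling_def)
  then show ?thesis using Hc_G by metis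
qed

lemma cstep_Nil: "cstep [] = [[]]" by simp
lemma cstep_1: "cstep (1 # r) = map (Cons 0) (cstep r)" by (subst cstep.simps(2)) simp
lemma cstep_num: "cstep (numeral w # r) = map (Cons (pred_numeral w)) (cstep r)"
  by (simp add: numeral_eq_Suc)
lemma cstep_0000: "cstep (0#0#0#0#r) = map (Cons 3) (cstep (0#0#0#r)) @ map (\<lambda>e. 0#0#0#0#e) (cstep r)"
  by simp
lemma cstep_0: "take 3 r \<noteq> [0,0,0] \<Longrightarrow> cstep (0 # r) = map (Cons 3) (cstep r)"
  by simp
lemma cstep_Suc: "cstep (Suc a # r) = map (Cons a) (cstep r)" by simp
lemmas cstep_eval = cstep_Nil cstep_Suc cstep_1 cstep_num cstep_0000 cstep_0

definition SL :: "nat list list" where "SL = [[0,0,0,0,0,0,0], [0,0,0,0,Suc 0,Suc 0,Suc 0], [0,0,0,0,2,2,2], [0,0,0,0,3,3,3], [0,0,0,Suc 0,Suc 0,Suc 0,Suc 0], [0,0,0,2,2,2,2], [0,0,0,3,3,3,3], [0,0,Suc 0,Suc 0,Suc 0,Suc 0,0], [0,0,2,2,2,2,0], [0,0,3,3,3,3,0], [0,Suc 0,Suc 0,Suc 0,Suc 0,0,0], [0,2,2,2,2,0,0], [0,3,3,3,3,0,0], [Suc 0,0,0,0,0,Suc 0,Suc 0], [Suc 0,Suc 0,0,0,0,0,Suc 0], [Suc 0,Suc 0,Suc 0,0,0,0,0], [Suc 0,Suc 0,Suc 0,Suc 0,0,0,0], [Suc 0,Suc 0,Suc 0,Suc 0,Suc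 0,Suc 0,Suc 0], [Suc 0,Suc 0,Suc 0,Suc 0,2,2,2], [Suc 0,Suc 0,Suc 0,Suc 0,3,3,3], [Suc 0,Suc 0,Suc 0,2,2,2,2], [Suc 0,Suc 0,Suc 0,3,3,3,3], [Suc 0,Suc 0,2,2,2,2,Suc 0], [Suc 0,Suc 0,3,3,3,3,Suc 0], [Suc 0,2,2,2,2,Suc 0,Suc 0], [Suc 0,3,3,3,3,Suc 0,Suc 0], [2,0,0,0,0,2,2], [2,Suc 0,Suc 0,Suc 0,Suc 0,2,2], [2,2,0,0,0,0,2], [2,2,Suc 0,Suc 0,Suc 0,Suc 0,2], [2,2,2,0,0,0,0], [2,2,2,Suc 0,Suc 0,Suc 0,Suc 0], [2,2,2,2,0,0,0], [2,2,2,2,Suc 0,Suc 0,Suc 0], [2,2,2,2,2,2,2], [2,2,2,2,3,3,3], [2,2,2,3,3,3,3], [2,2,3,3,3,3,2], [2,3,3,3,3,2,2], [3,0,0,0,0,3,3], [3,Suc 0,Suc 0,Suc 0,Suc 0,3,3], [3,2,2,2,2,3,3], [3,3,0,0,0,0,3], [3,3,Suc 0,Suc 0,Suc 0,Suc 0,3], [3,3,2,2,2,2,3], [3,3,3,0,0,0,0], [3,3,3,Suc 0,Suc 0,Suc 0,Suc 0], [3,3,3,2,2,2,2], [3,3,3,3,0,0,0], [3,3,3,3,Suc 0,Suc 0,Suc 0], [3,3,3,3,2,2,2], [3,3,3,3,3,3,3]]"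

lemma SL_closed: "\<forall>d\<in>set SL. \<forall>e\<in>set (cstep d). e \<in> set SL"
  unfolding SL_def by (simp del: cstep.simps add: cstep_eval)

lemma Gn1: "G 1 d = sum_list (map (G 0) (cstep d))"
  by (simp add: One_nat_def)
lemma Gt1:
  "G 1 [0,0,0,0,0,0,0] = 0"
  "G 1 [0,0,0,0,Suc 0,Suc 0,Suc 0] = 1"
  "G 1 [0,0,0,0,2,2,2] = 0"
  "G 1 [0,0,0,0,3,3,3] = 0"
  "G 1 [0,0,0,Suc 0,Suc 0,Suc 0,Suc 0] = 0"
  "G 1 [0,0,0,2,2,2,2] = 0"
  "G 1 [0,0,0,3,3,3,3] = 0"
  "G 1 [0,0,Suc 0,Suc 0,Suc 0,Suc 0,0] = 0"
  "G 1 [0,0,2,2,2,2,0] = 0"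
  "G 1 [0,0,3,3,3,3,0] = 0"
  "G 1 [0,Suc 0,Suc 0,Suc 0,Suc 0,0,0] = 0"
  "G 1 [0,2,2,2,2,0,0] = 0"
  "G 1 [0,3,3,3,3,0,0] = 0"
  "G 1 [Suc 0,0,0,0,0,Suc 0,Suc 0] = 1"
  "G 1 [Suc 0,Suc 0,0,0,0,0,Suc 0] = 1"
  "G 1 [Suc 0,Suc 0,Suc 0,0,0,0,0] = 1"
  "G 1 [Suc 0,Suc 0,Suc 0,Suc 0,0,0,0] = 0"
  "G 1 [Suc 0,Suc 0,Suc 0,Suc 0,Suc 0,Suc 0,Suc 0] = 1"
  "G 1 [Suc 0,Suc 0,Suc 0,Suc 0,2,2,2] = 0"
  "G 1 [Suc 0,Suc 0,Suc 0,Suc 0,3,3,3] = 0"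
  "G 1 [Suc 0,Suc 0,Suc 0,2,2,2,2] = 0"
  "G 1 [Suc 0,Suc 0,Suc 0,3,3,3,3] = 0"
  "G 1 [Suc 0,Suc 0,2,2,2,2,Suc 0] = 0"
  "G 1 [Suc 0,Suc 0,3,3,3,3,Suc 0] = 0"
  "G 1 [Suc 0,2,2,2,2,Suc 0,Suc 0] = 0"
  "G 1 [Suc 0,3,3,3,3,Suc 0,Suc 0] = 0"
  "G 1 [2,0,0,0,0,2,2] = 0"
  "G 1 [2,Suc 0,Suc 0,Suc 0,Suc 0,2,2] = 0"
  "G 1 [2,2,0,0,0,0,2] = 0"
  "G 1 [2,2,Suc 0,Suc 0,Suc 0,Suc 0,2] = 0"
  "G 1 [2,2,2,0,0,0,0] = 0"
  "G 1 [2,2,2,Suc 0,Suc 0,Suc 0,Suc 0] = 0"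
  "G 1 [2,2,2,2,0,0,0] = 0"
  "G 1 [2,2,2,2,Suc 0,Suc 0,Suc 0] = 0"
  "G 1 [2,2,2,2,2,2,2] = 0"
  "G 1 [2,2,2,2,3,3,3] = 0"
  "G 1 [2,2,2,3,3,3,3] = 0"
  "G 1 [2,2,3,3,3,3,2] = 0"
  "G 1 [2,3,3,3,3,2,2] = 0"
  "G 1 [3,0,0,0,0,3,3] = 0"
  "G 1 [3,Suc 0,Suc 0,Suc 0,Suc 0,3,3] = 0"
  "G 1 [3,2,2,2,2,3,3] = 0"
  "G 1 [3,3,0,0,0,0,3] = 0"
  "G 1 [3,3,Suc 0,Suc 0,Suc 0,Suc 0,3] = 0"
  "G 1 [3,3,2,2,2,2,3] = 0"
  "G 1 [3,3,3,0,0,0,0] = 0"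
  "G 1 [3,3,3,Suc 0,Suc 0,Suc 0,Suc 0] = 0"
  "G 1 [3,3,3,2,2,2,2] = 0"
  "G 1 [3,3,3,3,0,0,0] = 0"
  "G 1 [3,3,3,3,Suc 0,Suc 0,Suc 0] = 0"
  "G 1 [3,3,3,3,2,2,2] = 0"
  "G 1 [3,3,3,3,3,3,3] = 0"
  by (simp_all del: cstep.simps add: cstep_eval Gn1 )

lemma Gn2: "G 2 d = sum_list (map (G 1) (cstep d))"
  by (metis G.simps(2) Suc_1)
lemma Gt2:
  "G 2 [0,0,0,0,0,0,0] = 0"
  "G 2 [0,0,0,0,Suc 0,Suc 0,Suc 0] = 0"
  "G 2 [0,0,0,0,2,2,2] = 1"
  "G 2 [0,0,0,0,3,3,3] = 0"
  "G 2 [0,0,0,Suc 0,Suc 0,Suc 0,Suc 0] = 0"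
  "G 2 [0,0,0,2,2,2,2] = 0"
  "G 2 [0,0,0,3,3,3,3] = 0"
  "G 2 [0,0,Suc 0,Suc 0,Suc 0,Suc 0,0] = 0"
  "G 2 [0,0,2,2,2,2,0] = 0"
  "G 2 [0,0,3,3,3,3,0] = 0"
  "G 2 [0,Suc 0,Suc 0,Suc 0,Suc 0,0,0] = 0"
  "G 2 [0,2,2,2,2,0,0] = 0"
  "G 2 [0,3,3,3,3,0,0] = 0"
  "G 2 [Suc 0,0,0,0,0,Suc 0,Suc 0] = 0"
  "G 2 [Suc 0,Suc 0,0,0,0,0,Suc 0] = 0"
  "G 2 [Suc 0,Suc 0,Suc 0,0,0,0,0] = 0"
  "G 2 [Suc 0,Suc 0,Suc 0,Suc 0,0,0,0] = 0"
  "G 2 [Suc 0,Suc 0,Suc 0,Suc 0,Suc 0,Suc 0,Suc 0] = 0"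
  "G 2 [Suc 0,Suc 0,Suc 0,Suc 0,2,2,2] = 1"
  "G 2 [Suc 0,Suc 0,Suc 0,Suc 0,3,3,3] = 0"
  "G 2 [Suc 0,Suc 0,Suc 0,2,2,2,2] = 0"
  "G 2 [Suc 0,Suc 0,Suc 0,3,3,3,3] = 0"
  "G 2 [Suc 0,Suc 0,2,2,2,2,Suc 0] = 0"
  "G 2 [Suc 0,Suc 0,3,3,3,3,Suc 0] = 0"
  "G 2 [Suc 0,2,2,2,2,Suc 0,Suc 0] = 0"
  "G 2 [Suc 0,3,3,3,3,Suc 0,Suc 0] = 0"
  "G 2 [2,0,0,0,0,2,2] = 1"
  "G 2 [2,Suc 0,Suc 0,Suc 0,Suc 0,2,2] = 1"
  "G 2 [2,2,0,0,0,0,2] = 1"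
  "G 2 [2,2,Suc 0,Suc 0,Suc 0,Suc 0,2] = 1"
  "G 2 [2,2,2,0,0,0,0] = 1"
  "G 2 [2,2,2,Suc 0,Suc 0,Suc 0,Suc 0] = 1"
  "G 2 [2,2,2,2,0,0,0] = 0"
  "G 2 [2,2,2,2,Suc 0,Suc 0,Suc 0] = 0"
  "G 2 [2,2,2,2,2,2,2] = 1"
  "G 2 [2,2,2,2,3,3,3] = 0"
  "G 2 [2,2,2,3,3,3,3] = 0"
  "G 2 [2,2,3,3,3,3,2] = 0"
  "G 2 [2,3,3,3,3,2,2] = 0"
  "G 2 [3,0,0,0,0,3,3] = 0"
  "G 2 [3,Suc 0,Suc 0,Suc 0,Suc 0,3,3] = 0"
  "G 2 [3,2,2,2,2,3,3] = 0"
  "G 2 [3,3,0,0,0,0,3] = 0"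
  "G 2 [3,3,Suc 0,Suc 0,Suc 0,Suc 0,3] = 0"
  "G 2 [3,3,2,2,2,2,3] = 0"
  "G 2 [3,3,3,0,0,0,0] = 0"
  "G 2 [3,3,3,Suc 0,Suc 0,Suc 0,Suc 0] = 0"
  "G 2 [3,3,3,2,2,2,2] = 0"
  "G 2 [3,3,3,3,0,0,0] = 0"
  "G 2 [3,3,3,3,Suc 0,Suc 0,Suc 0] = 0"
  "G 2 [3,3,3,3,2,2,2] = 0"
  "G 2 [3,3,3,3,3,3,3] = 0"
  by (simp_all del: cstep.simps add: cstep_eval Gn2 Gt1)

lemma Gn3: "G 3 d = sum_list (map (G 2) (cstep d))"
  using G.simps(2)[of 2 d] by simp
lemma Gt3:
  "G 3 [0,0,0,0,0,0,0] = 0"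
  "G 3 [0,0,0,0,Suc 0,Suc 0,Suc 0] = 0"
  "G 3 [0,0,0,0,2,2,2] = 0"
  "G 3 [0,0,0,0,3,3,3] = 1"
  "G 3 [0,0,0,Suc 0,Suc 0,Suc 0,Suc 0] = 0"
  "G 3 [0,0,0,2,2,2,2] = 0"
  "G 3 [0,0,0,3,3,3,3] = 0"
  "G 3 [0,0,Suc 0,Suc 0,Suc 0,Suc 0,0] = 0"
  "G 3 [0,0,2,2,2,2,0] = 0"
  "G 3 [0,0,3,3,3,3,0] = 0"
  "G 3 [0,Suc 0,Suc 0,Suc 0,Suc 0,0,0] = 0"
  "G 3 [0,2,2,2,2,0,0] = 0"
  "G 3 [0,3,3,3,3,0,0] = 0"
  "G 3 [Suc 0,0,0,0,0,Suc 0,Suc 0] = 0"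
  "G 3 [Suc 0,Suc 0,0,0,0,0,Suc 0] = 0"
  "G 3 [Suc 0,Suc 0,Suc 0,0,0,0,0] = 0"
  "G 3 [Suc 0,Suc 0,Suc 0,Suc 0,0,0,0] = 0"
  "G 3 [Suc 0,Suc 0,Suc 0,Suc 0,Suc 0,Suc 0,Suc 0] = 0"
  "G 3 [Suc 0,Suc 0,Suc 0,Suc 0,2,2,2] = 0"
  "G 3 [Suc 0,Suc 0,Suc 0,Suc 0,3,3,3] = 1"
  "G 3 [Suc 0,Suc 0,Suc 0,2,2,2,2] = 0"
  "G 3 [Suc 0,Suc 0,Suc 0,3,3,3,3] = 0"
  "G 3 [Suc 0,Suc 0,2,2,2,2,Suc 0] = 0"
  "G 3 [Suc 0,Suc 0,3,3,3,3,Suc 0] = 0"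
  "G 3 [Suc 0,2,2,2,2,Suc 0,Suc 0] = 0"
  "G 3 [Suc 0,3,3,3,3,Suc 0,Suc 0] = 0"
  "G 3 [2,0,0,0,0,2,2] = 0"
  "G 3 [2,Suc 0,Suc 0,Suc 0,Suc 0,2,2] = 0"
  "G 3 [2,2,0,0,0,0,2] = 0"
  "G 3 [2,2,Suc 0,Suc 0,Suc 0,Suc 0,2] = 0"
  "G 3 [2,2,2,0,0,0,0] = 0"
  "G 3 [2,2,2,Suc 0,Suc 0,Suc 0,Suc 0] = 0"
  "G 3 [2,2,2,2,0,0,0] = 0"
  "G 3 [2,2,2,2,Suc 0,Suc 0,Suc 0] = 0"
  "G 3 [2,2,2,2,2,2,2] = 0"
  "G 3 [2,2,2,2,3,3,3] = 1"
  "G 3 [2,2,2,3,3,3,3] = 0"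
  "G 3 [2,2,3,3,3,3,2] = 0"
  "G 3 [2,3,3,3,3,2,2] = 0"
  "G 3 [3,0,0,0,0,3,3] = 1"
  "G 3 [3,Suc 0,Suc 0,Suc 0,Suc 0,3,3] = 1"
  "G 3 [3,2,2,2,2,3,3] = 1"
  "G 3 [3,3,0,0,0,0,3] = 1"
  "G 3 [3,3,Suc 0,Suc 0,Suc 0,Suc 0,3] = 1"
  "G 3 [3,3,2,2,2,2,3] = 1"
  "G 3 [3,3,3,0,0,0,0] = 1"
  "G 3 [3,3,3,Suc 0,Suc 0,Suc 0,Suc 0] = 1"
  "G 3 [3,3,3,2,2,2,2] = 1"
  "G 3 [3,3,3,3,0,0,0] = 0"
  "G 3 [3,3,3,3,Suc 0,Suc 0,Suc 0] = 0"
  "G 3 [3,3,3,3,2,2,2] = 0"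
  "G 3 [3,3,3,3,3,3,3] = 1"
  by (simp_all del: cstep.simps add: cstep_eval Gn3 Gt2)

lemma Gn4: "G 4 d = sum_list (map (G 3) (cstep d))"
  using G.simps(2)[of 3 d] by simp
lemma Gt4:
  "G 4 [0,0,0,0,0,0,0] = 5"
  "G 4 [0,0,0,0,Suc 0,Suc 0,Suc 0] = 0"
  "G 4 [0,0,0,0,2,2,2] = 0"
  "G 4 [0,0,0,0,3,3,3] = 0"
  "G 4 [0,0,0,Suc 0,Suc 0,Suc 0,Suc 0] = 1"
  "G 4 [0,0,0,2,2,2,2] = 1"
  "G 4 [0,0,0,3,3,3,3] = 1"
  "G 4 [0,0,Suc 0,Suc 0,Suc 0,Suc 0,0] = 1"
  "G 4 [0,0,2,2,2,2,0] = 1"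
  "G 4 [0,0,3,3,3,3,0] = 1"
  "G 4 [0,Suc 0,Suc 0,Suc 0,Suc 0,0,0] = 1"
  "G 4 [0,2,2,2,2,0,0] = 1"
  "G 4 [0,3,3,3,3,0,0] = 1"
  "G 4 [Suc 0,0,0,0,0,Suc 0,Suc 0] = 0"
  "G 4 [Suc 0,Suc 0,0,0,0,0,Suc 0] = 0"
  "G 4 [Suc 0,Suc 0,Suc 0,0,0,0,0] = 0"
  "G 4 [Suc 0,Suc 0,Suc 0,Suc 0,0,0,0] = 1"
  "G 4 [Suc 0,Suc 0,Suc 0,Suc 0,Suc 0,Suc 0,Suc 0] = 0"
  "G 4 [Suc 0,Suc 0,Suc 0,Suc 0,2,2,2] = 0"
  "G 4 [Suc 0,Suc 0,Suc 0,Suc 0,3,3,3] = 0"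
  "G 4 [Suc 0,Suc 0,Suc 0,2,2,2,2] = 0"
  "G 4 [Suc 0,Suc 0,Suc 0,3,3,3,3] = 0"
  "G 4 [Suc 0,Suc 0,2,2,2,2,Suc 0] = 0"
  "G 4 [Suc 0,Suc 0,3,3,3,3,Suc 0] = 0"
  "G 4 [Suc 0,2,2,2,2,Suc 0,Suc 0] = 0"
  "G 4 [Suc 0,3,3,3,3,Suc 0,Suc 0] = 0"
  "G 4 [2,0,0,0,0,2,2] = 0"
  "G 4 [2,Suc 0,Suc 0,Suc 0,Suc 0,2,2] = 0"
  "G 4 [2,2,0,0,0,0,2] = 0"
  "G 4 [2,2,Suc 0,Suc 0,Suc 0,Suc 0,2] = 0"
  "G 4 [2,2,2,0,0,0,0] = 0"
  "G 4 [2,2,2,Suc 0,Suc 0,Suc 0,Suc 0] = 0"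
  "G 4 [2,2,2,2,0,0,0] = 1"
  "G 4 [2,2,2,2,Suc 0,Suc 0,Suc 0] = 0"
  "G 4 [2,2,2,2,2,2,2] = 0"
  "G 4 [2,2,2,2,3,3,3] = 0"
  "G 4 [2,2,2,3,3,3,3] = 0"
  "G 4 [2,2,3,3,3,3,2] = 0"
  "G 4 [2,3,3,3,3,2,2] = 0"
  "G 4 [3,0,0,0,0,3,3] = 0"
  "G 4 [3,Suc 0,Suc 0,Suc 0,Suc 0,3,3] = 0"
  "G 4 [3,2,2,2,2,3,3] = 0"
  "G 4 [3,3,0,0,0,0,3] = 0"
  "G 4 [3,3,Suc 0,Suc 0,Suc 0,Suc 0,3] = 0"
  "G 4 [3,3,2,2,2,2,3] = 0"
  "G 4 [3,3,3,0,0,0,0] = 0"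
  "G 4 [3,3,3,Suc 0,Suc 0,Suc 0,Suc 0] = 0"
  "G 4 [3,3,3,2,2,2,2] = 0"
  "G 4 [3,3,3,3,0,0,0] = 1"
  "G 4 [3,3,3,3,Suc 0,Suc 0,Suc 0] = 0"
  "G 4 [3,3,3,3,2,2,2] = 0"
  "G 4 [3,3,3,3,3,3,3] = 0"
  by (simp_all del: cstep.simps add: cstep_eval Gn4 Gt3)

lemma Gn5: "G 5 d = sum_list (map (G 4) (cstep d))"
  using G.simps(2)[of 4 d] by simp
lemma Gt5:
  "G 5 [0,0,0,0,0,0,0] = 0"
  "G 5 [0,0,0,0,Suc 0,Suc 0,Suc 0] = 6"
  "G 5 [0,0,0,0,2,2,2] = 0"
  "G 5 [0,0,0,0,3,3,3] = 0"
  "G 5 [0,0,0,Suc 0,Suc 0,Suc 0,Suc 0] = 0"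
  "G 5 [0,0,0,2,2,2,2] = 0"
  "G 5 [0,0,0,3,3,3,3] = 0"
  "G 5 [0,0,Suc 0,Suc 0,Suc 0,Suc 0,0] = 0"
  "G 5 [0,0,2,2,2,2,0] = 0"
  "G 5 [0,0,3,3,3,3,0] = 0"
  "G 5 [0,Suc 0,Suc 0,Suc 0,Suc 0,0,0] = 0"
  "G 5 [0,2,2,2,2,0,0] = 0"
  "G 5 [0,3,3,3,3,0,0] = 0"
  "G 5 [Suc 0,0,0,0,0,Suc 0,Suc 0] = 6"
  "G 5 [Suc 0,Suc 0,0,0,0,0,Suc 0] = 6"
  "G 5 [Suc 0,Suc 0,Suc 0,0,0,0,0] = 6"
  "G 5 [Suc 0,Suc 0,Suc 0,Suc 0,0,0,0] = 0"
  "G 5 [Suc 0,Suc 0,Suc 0,Suc 0,Suc 0,Suc 0,Suc 0] = 5"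
  "G 5 [Suc 0,Suc 0,Suc 0,Suc 0,2,2,2] = 0"
  "G 5 [Suc 0,Suc 0,Suc 0,Suc 0,3,3,3] = 0"
  "G 5 [Suc 0,Suc 0,Suc 0,2,2,2,2] = 1"
  "G 5 [Suc 0,Suc 0,Suc 0,3,3,3,3] = 1"
  "G 5 [Suc 0,Suc 0,2,2,2,2,Suc 0] = 1"
  "G 5 [Suc 0,Suc 0,3,3,3,3,Suc 0] = 1"
  "G 5 [Suc 0,2,2,2,2,Suc 0,Suc 0] = 1"
  "G 5 [Suc 0,3,3,3,3,Suc 0,Suc 0] = 1"
  "G 5 [2,0,0,0,0,2,2] = 0"
  "G 5 [2,Suc 0,Suc 0,Suc 0,Suc 0,2,2] = 0"
  "G 5 [2,2,0,0,0,0,2] = 0"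
  "G 5 [2,2,Suc 0,Suc 0,Suc 0,Suc 0,2] = 0"
  "G 5 [2,2,2,0,0,0,0] = 0"
  "G 5 [2,2,2,Suc 0,Suc 0,Suc 0,Suc 0] = 0"
  "G 5 [2,2,2,2,0,0,0] = 0"
  "G 5 [2,2,2,2,Suc 0,Suc 0,Suc 0] = 1"
  "G 5 [2,2,2,2,2,2,2] = 0"
  "G 5 [2,2,2,2,3,3,3] = 0"
  "G 5 [2,2,2,3,3,3,3] = 0"
  "G 5 [2,2,3,3,3,3,2] = 0"
  "G 5 [2,3,3,3,3,2,2] = 0"
  "G 5 [3,0,0,0,0,3,3] = 0"
  "G 5 [3,Suc 0,Suc 0,Suc 0,Suc 0,3,3] = 0"
  "G 5 [3,2,2,2,2,3,3] = 0"
  "G 5 [3,3,0,0,0,0,3] = 0"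
  "G 5 [3,3,Suc 0,Suc 0,Suc 0,Suc 0,3] = 0"
  "G 5 [3,3,2,2,2,2,3] = 0"
  "G 5 [3,3,3,0,0,0,0] = 0"
  "G 5 [3,3,3,Suc 0,Suc 0,Suc 0,Suc 0] = 0"
  "G 5 [3,3,3,2,2,2,2] = 0"
  "G 5 [3,3,3,3,0,0,0] = 0"
  "G 5 [3,3,3,3,Suc 0,Suc 0,Suc 0] = 1"
  "G 5 [3,3,3,3,2,2,2] = 0"
  "G 5 [3,3,3,3,3,3,3] = 0"
  by (simp_all del: cstep.simps add: cstep_eval Gn5 Gt4)

lemma Gn6: "G 6 d = sum_list (map (G 5) (cstep d))"
  using G.simps(2)[of 5 d] by simp
lemma Gt6:
  "G 6 [0,0,0,0,0,0,0] = 0"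
  "G 6 [0,0,0,0,Suc 0,Suc 0,Suc 0] = 0"
  "G 6 [0,0,0,0,2,2,2] = 7"
  "G 6 [0,0,0,0,3,3,3] = 0"
  "G 6 [0,0,0,Suc 0,Suc 0,Suc 0,Suc 0] = 0"
  "G 6 [0,0,0,2,2,2,2] = 0"
  "G 6 [0,0,0,3,3,3,3] = 0"
  "G 6 [0,0,Suc 0,Suc 0,Suc 0,Suc 0,0] = 0"
  "G 6 [0,0,2,2,2,2,0] = 0"
  "G 6 [0,0,3,3,3,3,0] = 0"
  "G 6 [0,Suc 0,Suc 0,Suc 0,Suc 0,0,0] = 0"
  "G 6 [0,2,2,2,2,0,0] = 0"
  "G 6 [0,3,3,3,3,0,0] = 0"
  "G 6 [Suc 0,0,0,0,0,Suc 0,Suc 0] = 0"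
  "G 6 [Suc 0,Suc 0,0,0,0,0,Suc 0] = 0"
  "G 6 [Suc 0,Suc 0,Suc 0,0,0,0,0] = 0"
  "G 6 [Suc 0,Suc 0,Suc 0,Suc 0,0,0,0] = 0"
  "G 6 [Suc 0,Suc 0,Suc 0,Suc 0,Suc 0,Suc 0,Suc 0] = 0"
  "G 6 [Suc 0,Suc 0,Suc 0,Suc 0,2,2,2] = 6"
  "G 6 [Suc 0,Suc 0,Suc 0,Suc 0,3,3,3] = 0"
  "G 6 [Suc 0,Suc 0,Suc 0,2,2,2,2] = 0"
  "G 6 [Suc 0,Suc 0,Suc 0,3,3,3,3] = 0"
  "G 6 [Suc 0,Suc 0,2,2,2,2,Suc 0] = 0"
  "G 6 [Suc 0,Suc 0,3,3,3,3,Suc 0] = 0"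
  "G 6 [Suc 0,2,2,2,2,Suc 0,Suc 0] = 0"
  "G 6 [Suc 0,3,3,3,3,Suc 0,Suc 0] = 0"
  "G 6 [2,0,0,0,0,2,2] = 7"
  "G 6 [2,Suc 0,Suc 0,Suc 0,Suc 0,2,2] = 6"
  "G 6 [2,2,0,0,0,0,2] = 7"
  "G 6 [2,2,Suc 0,Suc 0,Suc 0,Suc 0,2] = 6"
  "G 6 [2,2,2,0,0,0,0] = 7"
  "G 6 [2,2,2,Suc 0,Suc 0,Suc 0,Suc 0] = 6"
  "G 6 [2,2,2,2,0,0,0] = 0"
  "G 6 [2,2,2,2,Suc 0,Suc 0,Suc 0] = 0"
  "G 6 [2,2,2,2,2,2,2] = 5"
  "G 6 [2,2,2,2,3,3,3] = 0"
  "G 6 [2,2,2,3,3,3,3] = 1"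
  "G 6 [2,2,3,3,3,3,2] = 1"
  "G 6 [2,3,3,3,3,2,2] = 1"
  "G 6 [3,0,0,0,0,3,3] = 0"
  "G 6 [3,Suc 0,Suc 0,Suc 0,Suc 0,3,3] = 0"
  "G 6 [3,2,2,2,2,3,3] = 0"
  "G 6 [3,3,0,0,0,0,3] = 0"
  "G 6 [3,3,Suc 0,Suc 0,Suc 0,Suc 0,3] = 0"
  "G 6 [3,3,2,2,2,2,3] = 0"
  "G 6 [3,3,3,0,0,0,0] = 0"
  "G 6 [3,3,3,Suc 0,Suc 0,Suc 0,Suc 0] = 0"
  "G 6 [3,3,3,2,2,2,2] = 0"
  "G 6 [3,3,3,3,0,0,0] = 0"
  "G 6 [3,3,3,3,Suc 0,Suc 0,Suc 0] = 0"
  "G 6 [3,3,3,3,2,2,2] = 1"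
  "G 6 [3,3,3,3,3,3,3] = 0"
  by (simp_all del: cstep.simps add: cstep_eval Gn6 Gt5)

lemma Gn7: "G 7 d = sum_list (map (G 6) (cstep d))"
  using G.simps(2)[of 6 d] by simp
lemma Gt7:
  "G 7 [0,0,0,0,0,0,0] = 0"
  "G 7 [0,0,0,0,Suc 0,Suc 0,Suc 0] = 0"
  "G 7 [0,0,0,0,2,2,2] = 0"
  "G 7 [0,0,0,0,3,3,3] = 8"
  "G 7 [0,0,0,Suc 0,Suc 0,Suc 0,Suc 0] = 0"
  "G 7 [0,0,0,2,2,2,2] = 0"
  "G 7 [0,0,0,3,3,3,3] = 0"
  "G 7 [0,0,Suc 0,Suc 0,Suc 0,Suc 0,0] = 0"
  "G 7 [0,0,2,2,2,2,0] = 0"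
  "G 7 [0,0,3,3,3,3,0] = 0"
  "G 7 [0,Suc 0,Suc 0,Suc 0,Suc 0,0,0] = 0"
  "G 7 [0,2,2,2,2,0,0] = 0"
  "G 7 [0,3,3,3,3,0,0] = 0"
  "G 7 [Suc 0,0,0,0,0,Suc 0,Suc 0] = 0"
  "G 7 [Suc 0,Suc 0,0,0,0,0,Suc 0] = 0"
  "G 7 [Suc 0,Suc 0,Suc 0,0,0,0,0] = 0"
  "G 7 [Suc 0,Suc 0,Suc 0,Suc 0,0,0,0] = 0"
  "G 7 [Suc 0,Suc 0,Suc 0,Suc 0,Suc 0,Suc 0,Suc 0] = 0"
  "G 7 [Suc 0,Suc 0,Suc 0,Suc 0,2,2,2] = 0"
  "G 7 [Suc 0,Suc 0,Suc 0,Suc 0,3,3,3] = 7"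
  "G 7 [Suc 0,Suc 0,Suc 0,2,2,2,2] = 0"
  "G 7 [Suc 0,Suc 0,Suc 0,3,3,3,3] = 0"
  "G 7 [Suc 0,Suc 0,2,2,2,2,Suc 0] = 0"
  "G 7 [Suc 0,Suc 0,3,3,3,3,Suc 0] = 0"
  "G 7 [Suc 0,2,2,2,2,Suc 0,Suc 0] = 0"
  "G 7 [Suc 0,3,3,3,3,Suc 0,Suc 0] = 0"
  "G 7 [2,0,0,0,0,2,2] = 0"
  "G 7 [2,Suc 0,Suc 0,Suc 0,Suc 0,2,2] = 0"
  "G 7 [2,2,0,0,0,0,2] = 0"
  "G 7 [2,2,Suc 0,Suc 0,Suc 0,Suc 0,2] = 0"
  "G 7 [2,2,2,0,0,0,0] = 0"
  "G 7 [2,2,2,Suc 0,Suc 0,Suc 0,Suc 0] = 0"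
  "G 7 [2,2,2,2,0,0,0] = 0"
  "G 7 [2,2,2,2,Suc 0,Suc 0,Suc 0] = 0"
  "G 7 [2,2,2,2,2,2,2] = 0"
  "G 7 [2,2,2,2,3,3,3] = 6"
  "G 7 [2,2,2,3,3,3,3] = 0"
  "G 7 [2,2,3,3,3,3,2] = 0"
  "G 7 [2,3,3,3,3,2,2] = 0"
  "G 7 [3,0,0,0,0,3,3] = 8"
  "G 7 [3,Suc 0,Suc 0,Suc 0,Suc 0,3,3] = 7"
  "G 7 [3,2,2,2,2,3,3] = 6"
  "G 7 [3,3,0,0,0,0,3] = 8"
  "G 7 [3,3,Suc 0,Suc 0,Suc 0,Suc 0,3] = 7"
  "G 7 [3,3,2,2,2,2,3] = 6"
  "G 7 [3,3,3,0,0,0,0] = 8"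
  "G 7 [3,3,3,Suc 0,Suc 0,Suc 0,Suc 0] = 7"
  "G 7 [3,3,3,2,2,2,2] = 6"
  "G 7 [3,3,3,3,0,0,0] = 0"
  "G 7 [3,3,3,3,Suc 0,Suc 0,Suc 0] = 0"
  "G 7 [3,3,3,3,2,2,2] = 0"
  "G 7 [3,3,3,3,3,3,3] = 5"
  by (simp_all del: cstep.simps add: cstep_eval Gn7 Gt6)

lemma Gn8: "G 8 d = sum_list (map (G 7) (cstep d))"
  using G.simps(2)[of 7 d] by simp
lemma Gt8:
  "G 8 [0,0,0,0,0,0,0] = 37"
  "G 8 [0,0,0,0,Suc 0,Suc 0,Suc 0] = 0"
  "G 8 [0,0,0,0,2,2,2] = 0"
  "G 8 [0,0,0,0,3,3,3] = 0"
  "G 8 [0,0,0,Suc 0,Suc 0,Suc 0,Suc 0] = 8"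
  "G 8 [0,0,0,2,2,2,2] = 7"
  "G 8 [0,0,0,3,3,3,3] = 6"
  "G 8 [0,0,Suc 0,Suc 0,Suc 0,Suc 0,0] = 8"
  "G 8 [0,0,2,2,2,2,0] = 7"
  "G 8 [0,0,3,3,3,3,0] = 6"
  "G 8 [0,Suc 0,Suc 0,Suc 0,Suc 0,0,0] = 8"
  "G 8 [0,2,2,2,2,0,0] = 7"
  "G 8 [0,3,3,3,3,0,0] = 6"
  "G 8 [Suc 0,0,0,0,0,Suc 0,Suc 0] = 0"
  "G 8 [Suc 0,Suc 0,0,0,0,0,Suc 0] = 0"
  "G 8 [Suc 0,Suc 0,Suc 0,0,0,0,0] = 0"
  "G 8 [Suc 0,Suc 0,Suc 0,Suc 0,0,0,0] = 8"
  "G 8 [Suc 0,Suc 0,Suc 0,Suc 0,Suc 0,Suc 0,Suc 0] = 0"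
  "G 8 [Suc 0,Suc 0,Suc 0,Suc 0,2,2,2] = 0"
  "G 8 [Suc 0,Suc 0,Suc 0,Suc 0,3,3,3] = 0"
  "G 8 [Suc 0,Suc 0,Suc 0,2,2,2,2] = 0"
  "G 8 [Suc 0,Suc 0,Suc 0,3,3,3,3] = 0"
  "G 8 [Suc 0,Suc 0,2,2,2,2,Suc 0] = 0"
  "G 8 [Suc 0,Suc 0,3,3,3,3,Suc 0] = 0"
  "G 8 [Suc 0,2,2,2,2,Suc 0,Suc 0] = 0"
  "G 8 [Suc 0,3,3,3,3,Suc 0,Suc 0] = 0"
  "G 8 [2,0,0,0,0,2,2] = 0"
  "G 8 [2,Suc 0,Suc 0,Suc 0,Suc 0,2,2] = 0"
  "G 8 [2,2,0,0,0,0,2] = 0"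
  "G 8 [2,2,Suc 0,Suc 0,Suc 0,Suc 0,2] = 0"
  "G 8 [2,2,2,0,0,0,0] = 0"
  "G 8 [2,2,2,Suc 0,Suc 0,Suc 0,Suc 0] = 0"
  "G 8 [2,2,2,2,0,0,0] = 7"
  "G 8 [2,2,2,2,Suc 0,Suc 0,Suc 0] = 0"
  "G 8 [2,2,2,2,2,2,2] = 0"
  "G 8 [2,2,2,2,3,3,3] = 0"
  "G 8 [2,2,2,3,3,3,3] = 0"
  "G 8 [2,2,3,3,3,3,2] = 0"
  "G 8 [2,3,3,3,3,2,2] = 0"
  "G 8 [3,0,0,0,0,3,3] = 0"
  "G 8 [3,Suc 0,Suc 0,Suc 0,Suc 0,3,3] = 0"
  "G 8 [3,2,2,2,2,3,3] = 0"
  "G 8 [3,3,0,0,0,0,3] = 0"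
  "G 8 [3,3,Suc 0,Suc 0,Suc 0,Suc 0,3] = 0"
  "G 8 [3,3,2,2,2,2,3] = 0"
  "G 8 [3,3,3,0,0,0,0] = 0"
  "G 8 [3,3,3,Suc 0,Suc 0,Suc 0,Suc 0] = 0"
  "G 8 [3,3,3,2,2,2,2] = 0"
  "G 8 [3,3,3,3,0,0,0] = 6"
  "G 8 [3,3,3,3,Suc 0,Suc 0,Suc 0] = 0"
  "G 8 [3,3,3,3,2,2,2] = 0"
  "G 8 [3,3,3,3,3,3,3] = 0"
  by (simp_all del: cstep.simps add: cstep_eval Gn8 Gt7)

lemma Gn9: "G 9 d = sum_list (map (G 8) (cstep d))"
  using G.simps(2)[of 8 d] by simp
lemma Gt9:
  "G 9 [0,0,0,0,0,0,0] = 0"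
  "G 9 [0,0,0,0,Suc 0,Suc 0,Suc 0] = 43"
  "G 9 [0,0,0,0,2,2,2] = 0"
  "G 9 [0,0,0,0,3,3,3] = 0"
  "G 9 [0,0,0,Suc 0,Suc 0,Suc 0,Suc 0] = 0"
  "G 9 [0,0,0,2,2,2,2] = 0"
  "G 9 [0,0,0,3,3,3,3] = 0"
  "G 9 [0,0,Suc 0,Suc 0,Suc 0,Suc 0,0] = 0"
  "G 9 [0,0,2,2,2,2,0] = 0"
  "G 9 [0,0,3,3,3,3,0] = 0"
  "G 9 [0,Suc 0,Suc 0,Suc 0,Suc 0,0,0] = 0"
  "G 9 [0,2,2,2,2,0,0] = 0"
  "G 9 [0,3,3,3,3,0,0] = 0"
  "G 9 [Suc 0,0,0,0,0,Suc 0,Suc 0] = 43"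
  "G 9 [Suc 0,Suc 0,0,0,0,0,Suc 0] = 43"
  "G 9 [Suc 0,Suc 0,Suc 0,0,0,0,0] = 43"
  "G 9 [Suc 0,Suc 0,Suc 0,Suc 0,0,0,0] = 0"
  "G 9 [Suc 0,Suc 0,Suc 0,Suc 0,Suc 0,Suc 0,Suc 0] = 37"
  "G 9 [Suc 0,Suc 0,Suc 0,Suc 0,2,2,2] = 0"
  "G 9 [Suc 0,Suc 0,Suc 0,Suc 0,3,3,3] = 0"
  "G 9 [Suc 0,Suc 0,Suc 0,2,2,2,2] = 8"
  "G 9 [Suc 0,Suc 0,Suc 0,3,3,3,3] = 7"
  "G 9 [Suc 0,Suc 0,2,2,2,2,Suc 0] = 8"
  "G 9 [Suc 0,Suc 0,3,3,3,3,Suc 0] = 7"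
  "G 9 [Suc 0,2,2,2,2,Suc 0,Suc 0] = 8"
  "G 9 [Suc 0,3,3,3,3,Suc 0,Suc 0] = 7"
  "G 9 [2,0,0,0,0,2,2] = 0"
  "G 9 [2,Suc 0,Suc 0,Suc 0,Suc 0,2,2] = 0"
  "G 9 [2,2,0,0,0,0,2] = 0"
  "G 9 [2,2,Suc 0,Suc 0,Suc 0,Suc 0,2] = 0"
  "G 9 [2,2,2,0,0,0,0] = 0"
  "G 9 [2,2,2,Suc 0,Suc 0,Suc 0,Suc 0] = 0"
  "G 9 [2,2,2,2,0,0,0] = 0"
  "G 9 [2,2,2,2,Suc 0,Suc 0,Suc 0] = 8"
  "G 9 [2,2,2,2,2,2,2] = 0"
  "G 9 [2,2,2,2,3,3,3] = 0"
  "G 9 [2,2,2,3,3,3,3] = 0"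
  "G 9 [2,2,3,3,3,3,2] = 0"
  "G 9 [2,3,3,3,3,2,2] = 0"
  "G 9 [3,0,0,0,0,3,3] = 0"
  "G 9 [3,Suc 0,Suc 0,Suc 0,Suc 0,3,3] = 0"
  "G 9 [3,2,2,2,2,3,3] = 0"
  "G 9 [3,3,0,0,0,0,3] = 0"
  "G 9 [3,3,Suc 0,Suc 0,Suc 0,Suc 0,3] = 0"
  "G 9 [3,3,2,2,2,2,3] = 0"
  "G 9 [3,3,3,0,0,0,0] = 0"
  "G 9 [3,3,3,Suc 0,Suc 0,Suc 0,Suc 0] = 0"
  "G 9 [3,3,3,2,2,2,2] = 0"
  "G 9 [3,3,3,3,0,0,0] = 0"
  "G 9 [3,3,3,3,Suc 0,Suc 0,Suc 0] = 7"
  "G 9 [3,3,3,3,2,2,2] = 0"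
  "G 9 [3,3,3,3,3,3,3] = 0"
  by (simp_all del: cstep.simps add: cstep_eval Gn9 Gt8)

lemma Gn10: "G 10 d = sum_list (map (G 9) (cstep d))"
  using G.simps(2)[of 9 d] by simp
lemma Gt10:
  "G 10 [0,0,0,0,0,0,0] = 0"
  "G 10 [0,0,0,0,Suc 0,Suc 0,Suc 0] = 0"
  "G 10 [0,0,0,0,2,2,2] = 50"
  "G 10 [0,0,0,0,3,3,3] = 0"
  "G 10 [0,0,0,Suc 0,Suc 0,Suc 0,Suc 0] = 0"
  "G 10 [0,0,0,2,2,2,2] = 0"
  "G 10 [0,0,0,3,3,3,3] = 0"
  "G 10 [0,0,Suc 0,Suc 0,Suc 0,Suc 0,0] = 0"
  "G 10 [0,0,2,2,2,2,0] = 0"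
  "G 10 [0,0,3,3,3,3,0] = 0"
  "G 10 [0,Suc 0,Suc 0,Suc 0,Suc 0,0,0] = 0"
  "G 10 [0,2,2,2,2,0,0] = 0"
  "G 10 [0,3,3,3,3,0,0] = 0"
  "G 10 [Suc 0,0,0,0,0,Suc 0,Suc 0] = 0"
  "G 10 [Suc 0,Suc 0,0,0,0,0,Suc 0] = 0"
  "G 10 [Suc 0,Suc 0,Suc 0,0,0,0,0] = 0"
  "G 10 [Suc 0,Suc 0,Suc 0,Suc 0,0,0,0] = 0"
  "G 10 [Suc 0,Suc 0,Suc 0,Suc 0,Suc 0,Suc 0,Suc 0] = 0"
  "G 10 [Suc 0,Suc 0,Suc 0,Suc 0,2,2,2] = 43"
  "G 10 [Suc 0,Suc 0,Suc 0,Suc 0,3,3,3] = 0"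
  "G 10 [Suc 0,Suc 0,Suc 0,2,2,2,2] = 0"
  "G 10 [Suc 0,Suc 0,Suc 0,3,3,3,3] = 0"
  "G 10 [Suc 0,Suc 0,2,2,2,2,Suc 0] = 0"
  "G 10 [Suc 0,Suc 0,3,3,3,3,Suc 0] = 0"
  "G 10 [Suc 0,2,2,2,2,Suc 0,Suc 0] = 0"
  "G 10 [Suc 0,3,3,3,3,Suc 0,Suc 0] = 0"
  "G 10 [2,0,0,0,0,2,2] = 50"
  "G 10 [2,Suc 0,Suc 0,Suc 0,Suc 0,2,2] = 43"
  "G 10 [2,2,0,0,0,0,2] = 50"
  "G 10 [2,2,Suc 0,Suc 0,Suc 0,Suc 0,2] = 43"
  "G 10 [2,2,2,0,0,0,0] = 50"
  "G 10 [2,2,2,Suc 0,Suc 0,Suc 0,Suc 0] = 43"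
  "G 10 [2,2,2,2,0,0,0] = 0"
  "G 10 [2,2,2,2,Suc 0,Suc 0,Suc 0] = 0"
  "G 10 [2,2,2,2,2,2,2] = 37"
  "G 10 [2,2,2,2,3,3,3] = 0"
  "G 10 [2,2,2,3,3,3,3] = 8"
  "G 10 [2,2,3,3,3,3,2] = 8"
  "G 10 [2,3,3,3,3,2,2] = 8"
  "G 10 [3,0,0,0,0,3,3] = 0"
  "G 10 [3,Suc 0,Suc 0,Suc 0,Suc 0,3,3] = 0"
  "G 10 [3,2,2,2,2,3,3] = 0"
  "G 10 [3,3,0,0,0,0,3] = 0"
  "G 10 [3,3,Suc 0,Suc 0,Suc 0,Suc 0,3] = 0"
  "G 10 [3,3,2,2,2,2,3] = 0"
  "G 10 [3,3,3,0,0,0,0] = 0"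
  "G 10 [3,3,3,Suc 0,Suc 0,Suc 0,Suc 0] = 0"
  "G 10 [3,3,3,2,2,2,2] = 0"
  "G 10 [3,3,3,3,0,0,0] = 0"
  "G 10 [3,3,3,3,Suc 0,Suc 0,Suc 0] = 0"
  "G 10 [3,3,3,3,2,2,2] = 8"
  "G 10 [3,3,3,3,3,3,3] = 0"
  by (simp_all del: cstep.simps add: cstep_eval Gn10 Gt9)

lemma Gn11: "G 11 d = sum_list (map (G 10) (cstep d))"
  using G.simps(2)[of 10 d] by simp
lemma Gt11:
  "G 11 [0,0,0,0,0,0,0] = 0"
  "G 11 [0,0,0,0,Suc 0,Suc 0,Suc 0] = 0"
  "G 11 [0,0,0,0,2,2,2] = 0"
  "G 11 [0,0,0,0,3,3,3] = 58"
  "G 11 [0,0,0,Suc 0,Suc 0,Suc 0,Suc 0] = 0"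
  "G 11 [0,0,0,2,2,2,2] = 0"
  "G 11 [0,0,0,3,3,3,3] = 0"
  "G 11 [0,0,Suc 0,Suc 0,Suc 0,Suc 0,0] = 0"
  "G 11 [0,0,2,2,2,2,0] = 0"
  "G 11 [0,0,3,3,3,3,0] = 0"
  "G 11 [0,Suc 0,Suc 0,Suc 0,Suc 0,0,0] = 0"
  "G 11 [0,2,2,2,2,0,0] = 0"
  "G 11 [0,3,3,3,3,0,0] = 0"
  "G 11 [Suc 0,0,0,0,0,Suc 0,Suc 0] = 0"
  "G 11 [Suc 0,Suc 0,0,0,0,0,Suc 0] = 0"
  "G 11 [Suc 0,Suc 0,Suc 0,0,0,0,0] = 0"
  "G 11 [Suc 0,Suc 0,Suc 0,Suc 0,0,0,0] = 0"
  "G 11 [Suc 0,Suc 0,Suc 0,Suc 0,Suc 0,Suc 0,Suc 0] = 0"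
  "G 11 [Suc 0,Suc 0,Suc 0,Suc 0,2,2,2] = 0"
  "G 11 [Suc 0,Suc 0,Suc 0,Suc 0,3,3,3] = 50"
  "G 11 [Suc 0,Suc 0,Suc 0,2,2,2,2] = 0"
  "G 11 [Suc 0,Suc 0,Suc 0,3,3,3,3] = 0"
  "G 11 [Suc 0,Suc 0,2,2,2,2,Suc 0] = 0"
  "G 11 [Suc 0,Suc 0,3,3,3,3,Suc 0] = 0"
  "G 11 [Suc 0,2,2,2,2,Suc 0,Suc 0] = 0"
  "G 11 [Suc 0,3,3,3,3,Suc 0,Suc 0] = 0"
  "G 11 [2,0,0,0,0,2,2] = 0"
  "G 11 [2,Suc 0,Suc 0,Suc 0,Suc 0,2,2] = 0"
  "G 11 [2,2,0,0,0,0,2] = 0"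
  "G 11 [2,2,Suc 0,Suc 0,Suc 0,Suc 0,2] = 0"
  "G 11 [2,2,2,0,0,0,0] = 0"
  "G 11 [2,2,2,Suc 0,Suc 0,Suc 0,Suc 0] = 0"
  "G 11 [2,2,2,2,0,0,0] = 0"
  "G 11 [2,2,2,2,Suc 0,Suc 0,Suc 0] = 0"
  "G 11 [2,2,2,2,2,2,2] = 0"
  "G 11 [2,2,2,2,3,3,3] = 43"
  "G 11 [2,2,2,3,3,3,3] = 0"
  "G 11 [2,2,3,3,3,3,2] = 0"
  "G 11 [2,3,3,3,3,2,2] = 0"
  "G 11 [3,0,0,0,0,3,3] = 58"
  "G 11 [3,Suc 0,Suc 0,Suc 0,Suc 0,3,3] = 50"
  "G 11 [3,2,2,2,2,3,3] = 43"
  "G 11 [3,3,0,0,0,0,3] = 58"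
  "G 11 [3,3,Suc 0,Suc 0,Suc 0,Suc 0,3] = 50"
  "G 11 [3,3,2,2,2,2,3] = 43"
  "G 11 [3,3,3,0,0,0,0] = 58"
  "G 11 [3,3,3,Suc 0,Suc 0,Suc 0,Suc 0] = 50"
  "G 11 [3,3,3,2,2,2,2] = 43"
  "G 11 [3,3,3,3,0,0,0] = 0"
  "G 11 [3,3,3,3,Suc 0,Suc 0,Suc 0] = 0"
  "G 11 [3,3,3,3,2,2,2] = 0"
  "G 11 [3,3,3,3,3,3,3] = 37"
  by (simp_all del: cstep.simps add: cstep_eval Gn11 Gt10)

lemma Gn12: "G 12 d = sum_list (map (G 11) (cstep d))"
  using G.simps(2)[of 11 d] by simp
lemma Gt12:
  "G 12 [0,0,0,0,0,0,0] = 269"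
  "G 12 [0,0,0,0,Suc 0,Suc 0,Suc 0] = 0"
  "G 12 [0,0,0,0,2,2,2] = 0"
  "G 12 [0,0,0,0,3,3,3] = 0"
  "G 12 [0,0,0,Suc 0,Suc 0,Suc 0,Suc 0] = 58"
  "G 12 [0,0,0,2,2,2,2] = 50"
  "G 12 [0,0,0,3,3,3,3] = 43"
  "G 12 [0,0,Suc 0,Suc 0,Suc 0,Suc 0,0] = 58"
  "G 12 [0,0,2,2,2,2,0] = 50"
  "G 12 [0,0,3,3,3,3,0] = 43"
  "G 12 [0,Suc 0,Suc 0,Suc 0,Suc 0,0,0] = 58"
  "G 12 [0,2,2,2,2,0,0] = 50"
  "G 12 [0,3,3,3,3,0,0] = 43"
  "G 12 [Suc 0,0,0,0,0,Suc 0,Suc 0] = 0"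
  "G 12 [Suc 0,Suc 0,0,0,0,0,Suc 0] = 0"
  "G 12 [Suc 0,Suc 0,Suc 0,0,0,0,0] = 0"
  "G 12 [Suc 0,Suc 0,Suc 0,Suc 0,0,0,0] = 58"
  "G 12 [Suc 0,Suc 0,Suc 0,Suc 0,Suc 0,Suc 0,Suc 0] = 0"
  "G 12 [Suc 0,Suc 0,Suc 0,Suc 0,2,2,2] = 0"
  "G 12 [Suc 0,Suc 0,Suc 0,Suc 0,3,3,3] = 0"
  "G 12 [Suc 0,Suc 0,Suc 0,2,2,2,2] = 0"
  "G 12 [Suc 0,Suc 0,Suc 0,3,3,3,3] = 0"
  "G 12 [Suc 0,Suc 0,2,2,2,2,Suc 0] = 0"
  "G 12 [Suc 0,Suc 0,3,3,3,3,Suc 0] = 0"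
  "G 12 [Suc 0,2,2,2,2,Suc 0,Suc 0] = 0"
  "G 12 [Suc 0,3,3,3,3,Suc 0,Suc 0] = 0"
  "G 12 [2,0,0,0,0,2,2] = 0"
  "G 12 [2,Suc 0,Suc 0,Suc 0,Suc 0,2,2] = 0"
  "G 12 [2,2,0,0,0,0,2] = 0"
  "G 12 [2,2,Suc 0,Suc 0,Suc 0,Suc 0,2] = 0"
  "G 12 [2,2,2,0,0,0,0] = 0"
  "G 12 [2,2,2,Suc 0,Suc 0,Suc 0,Suc 0] = 0"
  "G 12 [2,2,2,2,0,0,0] = 50"
  "G 12 [2,2,2,2,Suc 0,Suc 0,Suc 0] = 0"
  "G 12 [2,2,2,2,2,2,2] = 0"
  "G 12 [2,2,2,2,3,3,3] = 0"
  "G 12 [2,2,2,3,3,3,3] = 0"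
  "G 12 [2,2,3,3,3,3,2] = 0"
  "G 12 [2,3,3,3,3,2,2] = 0"
  "G 12 [3,0,0,0,0,3,3] = 0"
  "G 12 [3,Suc 0,Suc 0,Suc 0,Suc 0,3,3] = 0"
  "G 12 [3,2,2,2,2,3,3] = 0"
  "G 12 [3,3,0,0,0,0,3] = 0"
  "G 12 [3,3,Suc 0,Suc 0,Suc 0,Suc 0,3] = 0"
  "G 12 [3,3,2,2,2,2,3] = 0"
  "G 12 [3,3,3,0,0,0,0] = 0"
  "G 12 [3,3,3,Suc 0,Suc 0,Suc 0,Suc 0] = 0"
  "G 12 [3,3,3,2,2,2,2] = 0"
  "G 12 [3,3,3,3,0,0,0] = 43"
  "G 12 [3,3,3,3,Suc 0,Suc 0,Suc 0] = 0"
  "G 12 [3,3,3,3,2,2,2] = 0"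
  "G 12 [3,3,3,3,3,3,3] = 0"
  by (simp_all del: cstep.simps add: cstep_eval Gn12 Gt11)

lemma Gn13: "G 13 d = sum_list (map (G 12) (cstep d))"
  using G.simps(2)[of 12 d] by simp
lemma Gt13:
  "G 13 [0,0,0,0,0,0,0] = 0"
  "G 13 [0,0,0,0,Suc 0,Suc 0,Suc 0] = 312"
  "G 13 [0,0,0,0,2,2,2] = 0"
  "G 13 [0,0,0,0,3,3,3] = 0"
  "G 13 [0,0,0,Suc 0,Suc 0,Suc 0,Suc 0] = 0"
  "G 13 [0,0,0,2,2,2,2] = 0"
  "G 13 [0,0,0,3,3,3,3] = 0"
  "G 13 [0,0,Suc 0,Suc 0,Suc 0,Suc 0,0] = 0"
  "G 13 [0,0,2,2,2,2,0] = 0"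
  "G 13 [0,0,3,3,3,3,0] = 0"
  "G 13 [0,Suc 0,Suc 0,Suc 0,Suc 0,0,0] = 0"
  "G 13 [0,2,2,2,2,0,0] = 0"
  "G 13 [0,3,3,3,3,0,0] = 0"
  "G 13 [Suc 0,0,0,0,0,Suc 0,Suc 0] = 312"
  "G 13 [Suc 0,Suc 0,0,0,0,0,Suc 0] = 312"
  "G 13 [Suc 0,Suc 0,Suc 0,0,0,0,0] = 312"
  "G 13 [Suc 0,Suc 0,Suc 0,Suc 0,0,0,0] = 0"
  "G 13 [Suc 0,Suc 0,Suc 0,Suc 0,Suc 0,Suc 0,Suc 0] = 269"
  "G 13 [Suc 0,Suc 0,Suc 0,Suc 0,2,2,2] = 0"
  "G 13 [Suc 0,Suc 0,Suc 0,Suc 0,3,3,3] = 0"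
  "G 13 [Suc 0,Suc 0,Suc 0,2,2,2,2] = 58"
  "G 13 [Suc 0,Suc 0,Suc 0,3,3,3,3] = 50"
  "G 13 [Suc 0,Suc 0,2,2,2,2,Suc 0] = 58"
  "G 13 [Suc 0,Suc 0,3,3,3,3,Suc 0] = 50"
  "G 13 [Suc 0,2,2,2,2,Suc 0,Suc 0] = 58"
  "G 13 [Suc 0,3,3,3,3,Suc 0,Suc 0] = 50"
  "G 13 [2,0,0,0,0,2,2] = 0"
  "G 13 [2,Suc 0,Suc 0,Suc 0,Suc 0,2,2] = 0"
  "G 13 [2,2,0,0,0,0,2] = 0"
  "G 13 [2,2,Suc 0,Suc 0,Suc 0,Suc 0,2] = 0"
  "G 13 [2,2,2,0,0,0,0] = 0"
  "G 13 [2,2,2,Suc 0,Suc 0,Suc 0,Suc 0] = 0"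
  "G 13 [2,2,2,2,0,0,0] = 0"
  "G 13 [2,2,2,2,Suc 0,Suc 0,Suc 0] = 58"
  "G 13 [2,2,2,2,2,2,2] = 0"
  "G 13 [2,2,2,2,3,3,3] = 0"
  "G 13 [2,2,2,3,3,3,3] = 0"
  "G 13 [2,2,3,3,3,3,2] = 0"
  "G 13 [2,3,3,3,3,2,2] = 0"
  "G 13 [3,0,0,0,0,3,3] = 0"
  "G 13 [3,Suc 0,Suc 0,Suc 0,Suc 0,3,3] = 0"
  "G 13 [3,2,2,2,2,3,3] = 0"
  "G 13 [3,3,0,0,0,0,3] = 0"
  "G 13 [3,3,Suc 0,Suc 0,Suc 0,Suc 0,3] = 0"
  "G 13 [3,3,2,2,2,2,3] = 0"
  "G 13 [3,3,3,0,0,0,0] = 0"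
  "G 13 [3,3,3,Suc 0,Suc 0,Suc 0,Suc 0] = 0"
  "G 13 [3,3,3,2,2,2,2] = 0"
  "G 13 [3,3,3,3,0,0,0] = 0"
  "G 13 [3,3,3,3,Suc 0,Suc 0,Suc 0] = 50"
  "G 13 [3,3,3,3,2,2,2] = 0"
  "G 13 [3,3,3,3,3,3,3] = 0"
  by (simp_all del: cstep.simps add: cstep_eval Gn13 Gt12)

lemma Gn14: "G 14 d = sum_list (map (G 13) (cstep d))"
  using G.simps(2)[of 13 d] by simp
lemma Gt14:
  "G 14 [0,0,0,0,0,0,0] = 0"
  "G 14 [0,0,0,0,Suc 0,Suc 0,Suc 0] = 0"
  "G 14 [0,0,0,0,2,2,2] = 362"
  "G 14 [0,0,0,0,3,3,3] = 0"
  "G 14 [0,0,0,Suc 0,Suc 0,Suc 0,Suc 0] = 0"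
  "G 14 [0,0,0,2,2,2,2] = 0"
  "G 14 [0,0,0,3,3,3,3] = 0"
  "G 14 [0,0,Suc 0,Suc 0,Suc 0,Suc 0,0] = 0"
  "G 14 [0,0,2,2,2,2,0] = 0"
  "G 14 [0,0,3,3,3,3,0] = 0"
  "G 14 [0,Suc 0,Suc 0,Suc 0,Suc 0,0,0] = 0"
  "G 14 [0,2,2,2,2,0,0] = 0"
  "G 14 [0,3,3,3,3,0,0] = 0"
  "G 14 [Suc 0,0,0,0,0,Suc 0,Suc 0] = 0"
  "G 14 [Suc 0,Suc 0,0,0,0,0,Suc 0] = 0"
  "G 14 [Suc 0,Suc 0,Suc 0,0,0,0,0] = 0"
  "G 14 [Suc 0,Suc 0,Suc 0,Suc 0,0,0,0] = 0"
  "G 14 [Suc 0,Suc 0,Suc 0,Suc 0,Suc 0,Suc 0,Suc 0] = 0"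
  "G 14 [Suc 0,Suc 0,Suc 0,Suc 0,2,2,2] = 312"
  "G 14 [Suc 0,Suc 0,Suc 0,Suc 0,3,3,3] = 0"
  "G 14 [Suc 0,Suc 0,Suc 0,2,2,2,2] = 0"
  "G 14 [Suc 0,Suc 0,Suc 0,3,3,3,3] = 0"
  "G 14 [Suc 0,Suc 0,2,2,2,2,Suc 0] = 0"
  "G 14 [Suc 0,Suc 0,3,3,3,3,Suc 0] = 0"
  "G 14 [Suc 0,2,2,2,2,Suc 0,Suc 0] = 0"
  "G 14 [Suc 0,3,3,3,3,Suc 0,Suc 0] = 0"
  "G 14 [2,0,0,0,0,2,2] = 362"
  "G 14 [2,Suc 0,Suc 0,Suc 0,Suc 0,2,2] = 312"
  "G 14 [2,2,0,0,0,0,2] = 362"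
  "G 14 [2,2,Suc 0,Suc 0,Suc 0,Suc 0,2] = 312"
  "G 14 [2,2,2,0,0,0,0] = 362"
  "G 14 [2,2,2,Suc 0,Suc 0,Suc 0,Suc 0] = 312"
  "G 14 [2,2,2,2,0,0,0] = 0"
  "G 14 [2,2,2,2,Suc 0,Suc 0,Suc 0] = 0"
  "G 14 [2,2,2,2,2,2,2] = 269"
  "G 14 [2,2,2,2,3,3,3] = 0"
  "G 14 [2,2,2,3,3,3,3] = 58"
  "G 14 [2,2,3,3,3,3,2] = 58"
  "G 14 [2,3,3,3,3,2,2] = 58"
  "G 14 [3,0,0,0,0,3,3] = 0"
  "G 14 [3,Suc 0,Suc 0,Suc 0,Suc 0,3,3] = 0"
  "G 14 [3,2,2,2,2,3,3] = 0"
  "G 14 [3,3,0,0,0,0,3] = 0"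
  "G 14 [3,3,Suc 0,Suc 0,Suc 0,Suc 0,3] = 0"
  "G 14 [3,3,2,2,2,2,3] = 0"
  "G 14 [3,3,3,0,0,0,0] = 0"
  "G 14 [3,3,3,Suc 0,Suc 0,Suc 0,Suc 0] = 0"
  "G 14 [3,3,3,2,2,2,2] = 0"
  "G 14 [3,3,3,3,0,0,0] = 0"
  "G 14 [3,3,3,3,Suc 0,Suc 0,Suc 0] = 0"
  "G 14 [3,3,3,3,2,2,2] = 58"
  "G 14 [3,3,3,3,3,3,3] = 0"
  by (simp_all del: cstep.simps add: cstep_eval Gn14 Gt13)

lemma Gn15: "G 15 d = sum_list (map (G 14) (cstep d))"
  using G.simps(2)[of 14 d] by simp
lemma Gt15:
  "G 15 [0,0,0,0,0,0,0] = 0"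
  "G 15 [0,0,0,0,Suc 0,Suc 0,Suc 0] = 0"
  "G 15 [0,0,0,0,2,2,2] = 0"
  "G 15 [0,0,0,0,3,3,3] = 420"
  "G 15 [0,0,0,Suc 0,Suc 0,Suc 0,Suc 0] = 0"
  "G 15 [0,0,0,2,2,2,2] = 0"
  "G 15 [0,0,0,3,3,3,3] = 0"
  "G 15 [0,0,Suc 0,Suc 0,Suc 0,Suc 0,0] = 0"
  "G 15 [0,0,2,2,2,2,0] = 0"
  "G 15 [0,0,3,3,3,3,0] = 0"
  "G 15 [0,Suc 0,Suc 0,Suc 0,Suc 0,0,0] = 0"
  "G 15 [0,2,2,2,2,0,0] = 0"
  "G 15 [0,3,3,3,3,0,0] = 0"
  "G 15 [Suc 0,0,0,0,0,Suc 0,Suc 0] = 0"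
  "G 15 [Suc 0,Suc 0,0,0,0,0,Suc 0] = 0"
  "G 15 [Suc 0,Suc 0,Suc 0,0,0,0,0] = 0"
  "G 15 [Suc 0,Suc 0,Suc 0,Suc 0,0,0,0] = 0"
  "G 15 [Suc 0,Suc 0,Suc 0,Suc 0,Suc 0,Suc 0,Suc 0] = 0"
  "G 15 [Suc 0,Suc 0,Suc 0,Suc 0,2,2,2] = 0"
  "G 15 [Suc 0,Suc 0,Suc 0,Suc 0,3,3,3] = 362"
  "G 15 [Suc 0,Suc 0,Suc 0,2,2,2,2] = 0"
  "G 15 [Suc 0,Suc 0,Suc 0,3,3,3,3] = 0"
  "G 15 [Suc 0,Suc 0,2,2,2,2,Suc 0] = 0"
  "G 15 [Suc 0,Suc 0,3,3,3,3,Suc 0] = 0"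
  "G 15 [Suc 0,2,2,2,2,Suc 0,Suc 0] = 0"
  "G 15 [Suc 0,3,3,3,3,Suc 0,Suc 0] = 0"
  "G 15 [2,0,0,0,0,2,2] = 0"
  "G 15 [2,Suc 0,Suc 0,Suc 0,Suc 0,2,2] = 0"
  "G 15 [2,2,0,0,0,0,2] = 0"
  "G 15 [2,2,Suc 0,Suc 0,Suc 0,Suc 0,2] = 0"
  "G 15 [2,2,2,0,0,0,0] = 0"
  "G 15 [2,2,2,Suc 0,Suc 0,Suc 0,Suc 0] = 0"
  "G 15 [2,2,2,2,0,0,0] = 0"
  "G 15 [2,2,2,2,Suc 0,Suc 0,Suc 0] = 0"
  "G 15 [2,2,2,2,2,2,2] = 0"
  "G 15 [2,2,2,2,3,3,3] = 312"
  "G 15 [2,2,2,3,3,3,3] = 0"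
  "G 15 [2,2,3,3,3,3,2] = 0"
  "G 15 [2,3,3,3,3,2,2] = 0"
  "G 15 [3,0,0,0,0,3,3] = 420"
  "G 15 [3,Suc 0,Suc 0,Suc 0,Suc 0,3,3] = 362"
  "G 15 [3,2,2,2,2,3,3] = 312"
  "G 15 [3,3,0,0,0,0,3] = 420"
  "G 15 [3,3,Suc 0,Suc 0,Suc 0,Suc 0,3] = 362"
  "G 15 [3,3,2,2,2,2,3] = 312"
  "G 15 [3,3,3,0,0,0,0] = 420"
  "G 15 [3,3,3,Suc 0,Suc 0,Suc 0,Suc 0] = 362"
  "G 15 [3,3,3,2,2,2,2] = 312"
  "G 15 [3,3,3,3,0,0,0] = 0"
  "G 15 [3,3,3,3,Suc 0,Suc 0,Suc 0] = 0"
  "G 15 [3,3,3,3,2,2,2] = 0"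
  "G 15 [3,3,3,3,3,3,3] = 269"
  by (simp_all del: cstep.simps add: cstep_eval Gn15 Gt14)

lemma Gn16: "G 16 d = sum_list (map (G 15) (cstep d))"
  using G.simps(2)[of 15 d] by simp
lemma Gt16:
  "G 16 [0,0,0,0,0,0,0] = 1949"
  "G 16 [0,0,0,0,Suc 0,Suc 0,Suc 0] = 0"
  "G 16 [0,0,0,0,2,2,2] = 0"
  "G 16 [0,0,0,0,3,3,3] = 0"
  "G 16 [0,0,0,Suc 0,Suc 0,Suc 0,Suc 0] = 420"
  "G 16 [0,0,0,2,2,2,2] = 362"
  "G 16 [0,0,0,3,3,3,3] = 312"
  "G 16 [0,0,Suc 0,Suc 0,Suc 0,Suc 0,0] = 420"
  "G 16 [0,0,2,2,2,2,0] = 362"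
  "G 16 [0,0,3,3,3,3,0] = 312"
  "G 16 [0,Suc 0,Suc 0,Suc 0,Suc 0,0,0] = 420"
  "G 16 [0,2,2,2,2,0,0] = 362"
  "G 16 [0,3,3,3,3,0,0] = 312"
  "G 16 [Suc 0,0,0,0,0,Suc 0,Suc 0] = 0"
  "G 16 [Suc 0,Suc 0,0,0,0,0,Suc 0] = 0"
  "G 16 [Suc 0,Suc 0,Suc 0,0,0,0,0] = 0"
  "G 16 [Suc 0,Suc 0,Suc 0,Suc 0,0,0,0] = 420"
  "G 16 [Suc 0,Suc 0,Suc 0,Suc 0,Suc 0,Suc 0,Suc 0] = 0"
  "G 16 [Suc 0,Suc 0,Suc 0,Suc 0,2,2,2] = 0"
  "G 16 [Suc 0,Suc 0,Suc 0,Suc 0,3,3,3] = 0"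
  "G 16 [Suc 0,Suc 0,Suc 0,2,2,2,2] = 0"
  "G 16 [Suc 0,Suc 0,Suc 0,3,3,3,3] = 0"
  "G 16 [Suc 0,Suc 0,2,2,2,2,Suc 0] = 0"
  "G 16 [Suc 0,Suc 0,3,3,3,3,Suc 0] = 0"
  "G 16 [Suc 0,2,2,2,2,Suc 0,Suc 0] = 0"
  "G 16 [Suc 0,3,3,3,3,Suc 0,Suc 0] = 0"
  "G 16 [2,0,0,0,0,2,2] = 0"
  "G 16 [2,Suc 0,Suc 0,Suc 0,Suc 0,2,2] = 0"
  "G 16 [2,2,0,0,0,0,2] = 0"
  "G 16 [2,2,Suc 0,Suc 0,Suc 0,Suc 0,2] = 0"
  "G 16 [2,2,2,0,0,0,0] = 0"
  "G 16 [2,2,2,Suc 0,Suc 0,Suc 0,Suc 0] = 0"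
  "G 16 [2,2,2,2,0,0,0] = 362"
  "G 16 [2,2,2,2,Suc 0,Suc 0,Suc 0] = 0"
  "G 16 [2,2,2,2,2,2,2] = 0"
  "G 16 [2,2,2,2,3,3,3] = 0"
  "G 16 [2,2,2,3,3,3,3] = 0"
  "G 16 [2,2,3,3,3,3,2] = 0"
  "G 16 [2,3,3,3,3,2,2] = 0"
  "G 16 [3,0,0,0,0,3,3] = 0"
  "G 16 [3,Suc 0,Suc 0,Suc 0,Suc 0,3,3] = 0"
  "G 16 [3,2,2,2,2,3,3] = 0"
  "G 16 [3,3,0,0,0,0,3] = 0"
  "G 16 [3,3,Suc 0,Suc 0,Suc 0,Suc 0,3] = 0"
  "G 16 [3,3,2,2,2,2,3] = 0"
  "G 16 [3,3,3,0,0,0,0] = 0"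
  "G 16 [3,3,3,Suc 0,Suc 0,Suc 0,Suc 0] = 0"
  "G 16 [3,3,3,2,2,2,2] = 0"
  "G 16 [3,3,3,3,0,0,0] = 312"
  "G 16 [3,3,3,3,Suc 0,Suc 0,Suc 0] = 0"
  "G 16 [3,3,3,3,2,2,2] = 0"
  "G 16 [3,3,3,3,3,3,3] = 0"
  by (simp_all del: cstep.simps add: cstep_eval Gn16 Gt15)

lemma base0: "\<forall>d\<in>set SL. int (G 16 d) - 8 * int (G 12 d) + 6 * int (G 8 d) - 4 * int (G 4 d) + int (G 0 d) = 0"
  unfolding SL_def by (simp add: Gt16 Gt12 Gt8 Gt4)

definition Dl :: "nat \<Rightarrow> nat list \<Rightarrow> int" where
  "Dl n d = int (G (n+16) d) - 8 * int (G (n+12) d) + 6 * int (G (n+8) d) - 4 * int (G (n+4) d) + int (G n d)"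

lemma sum_lin: "sum_list (map (\<lambda>e. int (f1 e) - 8 * int (f2 e) + 6 * int (f3 e) - 4 * int (f4 e) + int (f5 e)) xs) =
  int (sum_list (map f1 xs)) - 8 * int (sum_list (map f2 xs)) + 6 * int (sum_list (map f3 xs))
   - 4 * int (sum_list (map f4 xs)) + int (sum_list (map f5 xs))"
  by (induction xs) (simp_all add: algebra_simps)

lemma Dl_Suc: "Dl (Suc n) d = sum_list (map (Dl n) (cstep d))"
proof -
  have e: "\<And>k. G (Suc n + k) d = sum_list (map (G (n+k)) (cstep d))" by simp
  have "Dl (Suc n) d = int (sum_list (map (G (n+16)) (cstep d))) - 8 * int (sum_list (map (G (n+12)) (cstep d)))
     + 6 * int (sum_list (map (G (n+8)) (cstep d))) - 4 * int (sum_list (map (G (n+4)) (cstep d)))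
     + int (sum_list (map (G (n+0)) (cstep d)))"
    unfolding Dl_def e[symmetric] by simp
  also have "\<dots> = sum_list (map (Dl n) (cstep d))"
    unfolding Dl_def sum_lin by simp
  finally show ?thesis .
qed

lemma sum_list_zero': "(\<forall>x\<in>set xs. f x = (0::int)) \<Longrightarrow> sum_list (map f xs) = 0"
  by (induction xs) auto

lemma Dl_zero: "d \<in> set SL \<Longrightarrow> Dl n d = 0"
proof (induction n arbitrary: d)
  case 0
  then show ?case using base0 by (simp add: Dl_def)
next
  case (Suc n)
  have "\<forall>e\<in>set (cstep d). Dl n e = 0" using SL_closed Suc by blast
  then show ?case by (simp add: Dl_Suc sum_list_zero')
qed

abbreviation z7 :: "nat list" where "z7 \<equiv> [0,0,0,0,0,0,0]"

lemma z7_SL: "z7 \<in> set SL" by (simp add: SL_def)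

lemma recur: "int (G (4*p+16) z7) - 8 * int (G (4*p+12) z7) + 6 * int (G (4*p+8) z7) - 4 * int (G (4*p+4) z7) + int (G (4*p) z7) = 0"
  using Dl_zero[OF z7_SL, of "4*p"] by (simp add: Dl_def)

lemma T14_eq: "T14_7 N = (if 7 dvd N then G (4 * (N div 7)) z7 else 0)"
proof -
  have d: "7 dvd (4*N) \<longleftrightarrow> 7 dvd N" by presburger
  show ?thesis
  proof (cases "7 dvd N")
    case True
    then obtain q where q: "N = 7*q" by (elim dvdE)
    then have "4 * N div 7 = 4 * (N div 7)" by simp
    then show ?thesis using True d count_G[of "4*(N div 7)"] by (simp add: T14_7_def)
  next
    case False
    then show ?thesis using d by (simp add: T14_7_def)
  qed
qed

definition aa :: "nat \<Rightarrow> rat" where "aa N = of_nat (T14_7 N)"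

lemma aa7: "aa (7*q) = of_nat (G (4*q) z7)" by (simp add: aa_def T14_eq)
lemma aa_not7: "\<not> 7 dvd N \<Longrightarrow> aa N = 0" by (simp add: aa_def T14_eq)

lemma coef: "aa N - 8 * (if N < 7 then 0 else aa (N-7)) + 6 * (if N < 14 then 0 else aa (N-14))
   - 4 * (if N < 21 then 0 else aa (N-21)) + (if N < 28 then 0 else aa (N-28)) =
   (if N = 0 then 1 else 0) - 3 * (if N = 7 then 1 else 0) + 3 * (if N = 14 then 1 else 0) - (if N = 21 then 1 else 0)"
proof (cases "7 dvd N")
  case False
  have n1: "\<not> 7 dvd (N - 7)" if "\<not> N < 7" using False that by presburger
  have n2: "\<not> 7 dvd (N - 14)" if "\<not> N < 14" using False that by presburger
  have n3: "\<not> 7 dvd (N - 21)" if "\<not> N < 21" using False that by presburger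
  have n4: "\<not> 7 dvd (N - 28)" if "\<not> N < 28" using False that by presburger
  have "N \<noteq> 0 \<and> N \<noteq> 7 \<and> N \<noteq> 14 \<and> N \<noteq> 21" using False by presburger
  then show ?thesis using False n1 n2 n3 n4 by (simp add: aa_not7)
next
  case True
  then obtain q where q: "N = 7*q" by (elim dvdE)
  have s: "7*q - 7*i = 7*(q-i)" for i by (simp add: diff_mult_distrib2)
  have l: "7*q < 7*i \<longleftrightarrow> q < i" for i by simp
  have e7: "(7::nat) = 7*1" "(14::nat) = 7*2" "(21::nat) = 7*3" "(28::nat) = 7*4" by simp_all
  have t1: "(if N < 7 then 0 else aa (N-7)) = (if q < 1 then 0 else of_nat (G (4*(q-1)) z7))"
  proof -
    have "N - 7 = 7*(q-1)" using s[of 1] q by simp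
    moreover have "N < 7 \<longleftrightarrow> q < 1" using q by simp
    ultimately show ?thesis by (simp add: aa7)
  qed
  have t2: "(if N < 14 then 0 else aa (N-14)) = (if q < 2 then 0 else of_nat (G (4*(q-2)) z7))"
  proof -
    have "N - 14 = 7*(q-2)" using s[of 2] q by simp
    moreover have "N < 14 \<longleftrightarrow> q < 2" using q by simp
    ultimately show ?thesis by (simp add: aa7)
  qed
  have t3: "(if N < 21 then 0 else aa (N-21)) = (if q < 3 then 0 else of_nat (G (4*(q-3)) z7))"
  proof -
    have "N - 21 = 7*(q-3)" using s[of 3] q by simp
    moreover have "N < 21 \<longleftrightarrow> q < 3" using q by simp
    ultimately show ?thesis by (simp add: aa7)
  qed
  have t4: "(if N < 28 then 0 else aa (N-28)) = (if q < 4 then 0 else of_nat (G (4*(q-4)) z7))"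
  proof -
    have "N - 28 = 7*(q-4)" using s[of 4] q by simp
    moreover have "N < 28 \<longleftrightarrow> q < 4" using q by simp
    ultimately show ?thesis by (simp add: aa7)
  qed
  have t0: "aa N = of_nat (G (4*q) z7)" using q aa7 by simp
  have g: "aa N - 8 * (if N < 7 then 0 else aa (N-7)) + 6 * (if N < 14 then 0 else aa (N-14))
   - 4 * (if N < 21 then 0 else aa (N-21)) + (if N < 28 then 0 else aa (N-28)) =
   of_nat (G (4*q) z7) - 8 * (if q < 1 then 0 else of_nat (G (4*(q-1)) z7))
   + 6 * (if q < 2 then 0 else of_nat (G (4*(q-2)) z7))
   - 4 * (if q < 3 then 0 else of_nat (G (4*(q-3)) z7))
   + (if q < 4 then 0 else of_nat (G (4*(q-4)) z7))"
    unfolding t0 t1 t2 t3 t4 by (rule refl)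
  show ?thesis
  proof (cases "q \<ge> 4")
    case True
    then obtain p where p: "q = p + 4" by (metis add.commute le_Suc_ex)
    have r: "(of_int (int (G (4*p+16) z7) - 8 * int (G (4*p+12) z7) + 6 * int (G (4*p+8) z7) - 4 * int (G (4*p+4) z7) + int (G (4*p) z7)) :: rat) = 0"
      using recur[of p] by simp
    have r': "of_nat (G (4*p+16) z7) - 8 * of_nat (G (4*p+12) z7) + 6 * of_nat (G (4*p+8) z7) - 4 * of_nat (G (4*p+4) z7) + of_nat (G (4*p) z7) = (0::rat)"
      using r by (simp only: of_int_add of_int_diff of_int_mult of_int_of_nat_eq of_int_numeral)
    have e1: "4*q = 4*p+16" "4*(q-1) = 4*p+12" "4*(q-2) = 4*p+8" "4*(q-3) = 4*p+4" "4*(q-4) = 4*p"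
      using p by simp_all
    have nq: "(q < 1) = False" "(q < 2) = False" "(q < 3) = False" "(q < 4) = False" using True by auto
    have "of_nat (G (4*q) z7) - 8 * (if q < 1 then 0 else of_nat (G (4*(q-1)) z7))
   + 6 * (if q < 2 then 0 else of_nat (G (4*(q-2)) z7))
   - 4 * (if q < 3 then 0 else of_nat (G (4*(q-3)) z7))
   + (if q < 4 then 0 else of_nat (G (4*(q-4)) z7)) = (0::rat)"
      unfolding e1 nq if_False by (rule r')
    moreover have "N \<noteq> 0" "N \<noteq> 7" "N \<noteq> 14" "N \<noteq> 21" using q True by auto
    ultimately show ?thesis using g by simp
  next
    case False
    then have "q = 0 \<or> q = 1 \<or> q = 2 \<or> q = 3" by auto
    moreover have "G 0 z7 = 1" "G 4 z7 = 5" "G 8 z7 = 37" "G 12 z7 = 269"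
      by (simp_all add: Gt4 Gt8 Gt12)
    ultimately show ?thesis using g q by auto
  qed
qed

lemma num_eq: "(1 - fps_X ^ 7) ^ 3 = (1 - 3 * fps_X^7 + 3 * fps_X^14 - fps_X^21 :: rat fps)"
proof -
  have a: "(1 - y)^3 = 1 - 3*y + 3*y^2 - y^3" for y :: "rat fps"
    by (simp add: power3_eq_cube power2_eq_square algebra_simps)
  have b: "(fps_X ^ 7 :: rat fps)^2 = fps_X^14" "(fps_X ^ 7 :: rat fps)^3 = fps_X^21"
    by (simp_all add: power_mult[symmetric])
  show ?thesis using a[of "fps_X^7"] b by simp
qed

theorem mainTheorem6:
  shows "Abs_fps (\<lambda>N. of_nat (T14_7 N) :: rat) =
    (1 - fps_X ^ 7) ^ 3 / (1 - 8 * fps_X ^ 7 + 6 * fps_X ^ 14 - 4 * fps_X ^ 21 + fps_X ^ 28)"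
proof -
  let ?A = "Abs_fps (\<lambda>N. of_nat (T14_7 N) :: rat)"
  let ?D = "1 - 8 * fps_X ^ 7 + 6 * fps_X ^ 14 - 4 * fps_X ^ 21 + fps_X ^ 28 :: rat fps"
  have D0: "fps_nth ?D 0 \<noteq> 0" by simp
  have AD: "?A * ?D = (1 - fps_X ^ 7) ^ 3"
  proof (rule fps_ext)
    fix N
    have "?A * ?D = ?A - 8 * (?A * fps_X^7) + 6 * (?A * fps_X^14) - 4 * (?A * fps_X^21) + ?A * fps_X^28"
      by (simp add: algebra_simps)
    then have "fps_nth (?A * ?D) N = aa N - 8 * (if N < 7 then 0 else aa (N-7)) + 6 * (if N < 14 then 0 else aa (N-14))
   - 4 * (if N < 21 then 0 else aa (N-21)) + (if N < 28 then 0 else aa (N-28))"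
      by (simp add: fps_X_power_mult_right_nth aa_def numeral_fps_const)
    also have "\<dots> = fps_nth (1 - 3 * fps_X^7 + 3 * fps_X^14 - fps_X^21 :: rat fps) N"
      unfolding coef by (simp add: numeral_fps_const)
    finally show "fps_nth (?A * ?D) N = fps_nth ((1 - fps_X ^ 7) ^ 3) N" by (simp add: num_eq)
  qed
  have "(1 - fps_X ^ 7) ^ 3 / ?D = (1 - fps_X ^ 7) ^ 3 * inverse ?D"
    by (rule fps_divide_unit[OF D0])
  also have "\<dots> = ?A * (?D * inverse ?D)" using AD by (simp add: mult.assoc)
  also have "\<dots> = ?A" using inverse_mult_eq_1'[OF D0] by simp
  finally show ?thesis by simp
qed

end
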